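(* Let $b,c,d\in\mathbb{R}$ and $Q(\phi)=\phi^4-c\phi^2+2b\phi+2d$. Consider real solutions $\phi$ of the system $\phi'''-6\phi^2\phi'+c\phi'=0$, $\phi''-2\phi^3+c\phi=b$, $(\phi')^2=Q(\phi)$. There exist bounded periodic (nonconstant) solutions of this system if and only if the four roots of $Q$ are real and distinct, which is equivalent to $(b,c)\in\Omega$, where $\Omega=\{(b,c): b\in(-b_c,b_c),\ c>0\}$ and $b_c=\sqrt{2c^3}/\sqrt{27}$. Ordering the four roots of $Q$ as $u_4<u_3<u_2<u_1$, the solution is given by $$\phi(x)=u_4+\frac{(u_2-u_4)(u_3-u_4)}{(u_2-u_4)-(u_2-u_3)\mathrm{sn}^2(\nu x)},$$ where $\nu=\frac12\sqrt{(u_1-u_3)(u_2-u_4)}$ and $\mathrm{sn}$ has modulus $k=\sqrt{\frac{(u_1-u_4)(u_2-u_3)}{(u_1-u_3)(u_2-u_4)}}$. The fundamental period of $\phi$ is $2\nu^{-1}K(k)$, and its minimal and maximal values on $[-\nu^{-1}K,\nu^{-1}K]$ are attained at $\phi(0)=u_3$ and $\phi(\pm\nu^{-1}K)=u_2$, respectively.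
   Context: $K(k)$ denotes the complete elliptic integral of the first kind and $\mathrm{sn}$ the Jacobi elliptic sine function with modulus $k$. *)

theory Defs
  imports "HOL-Analysis.Analysis"
begin

definition ellip_F :: "real \<Rightarrow> real \<Rightarrow> real" where
  "ellip_F phi k =
     (if 0 \<le> phi then integral {0..phi} (\<lambda>t. 1 / sqrt (1 - k\<^sup>2 * (sin t)\<^sup>2))
      else - integral {phi..0} (\<lambda>t. 1 / sqrt (1 - k\<^sup>2 * (sin t)\<^sup>2)))"

definition ellip_K :: "real \<Rightarrow> real" where
  "ellip_K k = ellip_F (pi / 2) k"

text \<open>Jacobi amplitude: inverse of F(.,k) (meaningful for 0 <= k < 1), and sn = sin o am.\<close>
definition jacobi_am :: "real \<Rightarrow> real \<Rightarrow> real" where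
  "jacobi_am u k = (THE phi. ellip_F phi k = u)"

definition jacobi_sn :: "real \<Rightarrow> real \<Rightarrow> real" where
  "jacobi_sn u k = sin (jacobi_am u k)"

definition Qpoly :: "real \<Rightarrow> real \<Rightarrow> real \<Rightarrow> real \<Rightarrow> real" where
  "Qpoly b c d p = p ^ 4 - c * p\<^sup>2 + 2 * b * p + 2 * d"

definition is_solution :: "real \<Rightarrow> real \<Rightarrow> real \<Rightarrow> (real \<Rightarrow> real) \<Rightarrow> bool" where
  "is_solution b c d \<phi> \<longleftrightarrow>
     (\<exists>\<phi>1 \<phi>2 \<phi>3. \<forall>x.
        (\<phi> has_real_derivative \<phi>1 x) (at x) \<and>
        (\<phi>1 has_real_derivative \<phi>2 x) (at x) \<and>
        (\<phi>2 has_real_derivative \<phi>3 x) (at x) \<and>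
        \<phi>3 x - 6 * (\<phi> x)\<^sup>2 * \<phi>1 x + c * \<phi>1 x = 0 \<and>
        \<phi>2 x - 2 * (\<phi> x) ^ 3 + c * \<phi> x = b \<and>
        (\<phi>1 x)\<^sup>2 = Qpoly b c d (\<phi> x))"

definition periodic_fun :: "(real \<Rightarrow> real) \<Rightarrow> bool" where
  "periodic_fun f \<longleftrightarrow> (\<exists>T>0. \<forall>x. f (x + T) = f x)"

definition fundamental_period :: "(real \<Rightarrow> real) \<Rightarrow> real \<Rightarrow> bool" where
  "fundamental_period f T \<longleftrightarrow> T > 0 \<and> (\<forall>x. f (x + T) = f x) \<and>
     (\<forall>S. 0 < S \<and> S < T \<longrightarrow> \<not> (\<forall>x. f (x + S) = f x))"

definition nonconstant :: "(real \<Rightarrow> real) \<Rightarrow> bool" where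
  "nonconstant f \<longleftrightarrow> \<not> (\<exists>a. \<forall>x. f x = a)"

definition b_crit :: "real \<Rightarrow> real" where
  "b_crit c = sqrt (2 * c ^ 3) / sqrt 27"

definition Omega :: "(real \<times> real) set" where
  "Omega = {(b, c). c > 0 \<and> - b_crit c < b \<and> b < b_crit c}"

definition bpn_solution :: "real \<Rightarrow> real \<Rightarrow> real \<Rightarrow> (real \<Rightarrow> real) \<Rightarrow> bool" where
  "bpn_solution b c d \<phi> \<longleftrightarrow>
     is_solution b c d \<phi> \<and> bounded (range \<phi>) \<and> periodic_fun \<phi> \<and> nonconstant \<phi>"

end

theory Submission
  imports Defs
begin
definition eg :: "real \<Rightarrow> real \<Rightarrow> real" where
  "eg k t = 1 / sqrt (1 - k\<^sup>2 * (sin t)\<^sup>2)"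

lemma eg_rad_pos: fixes k t :: real assumes "k\<^sup>2 < 1" shows "0 < 1 - k\<^sup>2 * (sin t)\<^sup>2"
proof -
  have "(sin t)\<^sup>2 \<le> 1" using sin_cos_squared_add[of t] by (smt (verit) zero_le_power2)
  hence "k\<^sup>2 * (sin t)\<^sup>2 \<le> k\<^sup>2" by (simp add: mult_left_le)
  thus ?thesis using assms by linarith
qed

lemma eg_ge1: fixes k t :: real assumes "k\<^sup>2 < 1" shows "1 \<le> eg k t"
proof -
  have a: "0 < 1 - k\<^sup>2 * (sin t)\<^sup>2" by (rule eg_rad_pos[OF assms])
  have "1 - k\<^sup>2 * (sin t)\<^sup>2 \<le> 1" by simp
  hence "sqrt (1 - k\<^sup>2 * (sin t)\<^sup>2) \<le> 1" by simp
  moreover have "0 < sqrt (1 - k\<^sup>2 * (sin t)\<^sup>2)" using a by simp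
  ultimately show ?thesis unfolding eg_def by simp
qed

lemma eg_cont: assumes "k\<^sup>2 < 1" shows "continuous_on S (eg k)"
proof -
  have "\<forall>t. 1 - k\<^sup>2 * (sin t)\<^sup>2 \<noteq> 0" using eg_rad_pos[OF assms] by (metis less_irrefl)
  thus ?thesis unfolding eg_def by (intro continuous_intros) auto
qed

lemma eg_even: "eg k (-t) = eg k t" by (simp add: eg_def)
lemma eg_pi: "eg k (t + pi) = eg k t" by (simp add: eg_def)
lemma eg_refl: "eg k (pi/2 + t) = eg k (pi/2 - t)" by (simp add: eg_def sin_cos_eq cos_add cos_diff)

lemma ellip_F_eq: "ellip_F phi k =
  (if 0 \<le> phi then integral {0..phi} (eg k) else - integral {phi..0} (eg k))"
  unfolding ellip_F_def eg_def by simp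

lemma ellip_F_repr:
  assumes k: "k\<^sup>2 < 1" and "a \<le> 0" and "a \<le> phi"
  shows "ellip_F phi k = integral {a..phi} (eg k) - integral {a..0} (eg k)"
proof (cases "0 \<le> phi")
  case True
  have "integral {a..0} (eg k) + integral {0..phi} (eg k) = integral {a..phi} (eg k)"
    by (rule Henstock_Kurzweil_Integration.integral_combine) (use assms True in \<open>auto intro!: integrable_continuous_real eg_cont\<close>)
  then show ?thesis using True by (simp add: ellip_F_eq)
next
  case False
  have "integral {a..phi} (eg k) + integral {phi..0} (eg k) = integral {a..0} (eg k)"
    by (rule Henstock_Kurzweil_Integration.integral_combine) (use assms False in \<open>auto intro!: integrable_continuous_real eg_cont\<close>)
  then show ?thesis using False by (simp add: ellip_F_eq)
qed

lemma ellip_F_deriv: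
  assumes k: "k\<^sup>2 < 1"
  shows "((\<lambda>p. ellip_F p k) has_real_derivative eg k x) (at x)"
proof -
  define a where "a = - \<bar>x\<bar> - 1"
  define b where "b = \<bar>x\<bar> + 1"
  have "((\<lambda>p. integral {a..p} (eg k)) has_real_derivative eg k x) (at x within {a..b})"
    by (rule integral_has_real_derivative) (auto simp: a_def b_def intro!: eg_cont k)
  hence "((\<lambda>p. integral {a..p} (eg k)) has_real_derivative eg k x) (at x within {a<..<b})"
    by (rule has_field_derivative_subset) auto
  hence "((\<lambda>p. integral {a..p} (eg k)) has_real_derivative eg k x) (at x)"
    by (subst (asm) at_within_open) (auto simp: a_def b_def)
  hence "((\<lambda>p. integral {a..p} (eg k) - integral {a..0} (eg k)) has_real_derivative eg k x) (at x)"
    by (auto intro!: derivative_eq_intros)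
  thus ?thesis
    by (rule has_field_derivative_transform_within_open[where S="{a<..<b}"])
       (auto simp: a_def b_def intro!: ellip_F_repr[symmetric] k)
qed

lemma ellip_F_cont: "k\<^sup>2 < 1 \<Longrightarrow> isCont (\<lambda>p. ellip_F p k) x"
  using ellip_F_deriv DERIV_isCont by blast

lemma ellip_F_0: "ellip_F 0 k = 0" by (simp add: ellip_F_eq)

lemma ellip_F_mono: assumes k: "k\<^sup>2 < 1" and "x < y" shows "ellip_F x k < ellip_F y k"
  using assms(2)
  by (rule DERIV_pos_imp_increasing) (metis ellip_F_deriv[OF k] eg_ge1[OF k] less_le_trans zero_less_one)

lemma ellip_F_ge: assumes k: "k\<^sup>2 < 1" and "0 \<le> x" shows "x \<le> ellip_F x k"
proof -
  have "(\<lambda>p. ellip_F p k - p) 0 \<le> (\<lambda>p. ellip_F p k - p) x"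
    using assms(2)
    by (rule DERIV_nonneg_imp_nondecreasing)
       (auto intro!: exI derivative_eq_intros ellip_F_deriv[OF k] simp: eg_ge1[OF k])
  thus ?thesis by (simp add: ellip_F_0)
qed

lemma ellip_F_odd: assumes k: "k\<^sup>2 < 1" shows "ellip_F (-x) k = - ellip_F x k"
proof -
  have "(\<lambda>p. ellip_F (-p) k + ellip_F p k) x = (\<lambda>p. ellip_F (-p) k + ellip_F p k) 0"
    by (rule DERIV_isconst_all)
       (auto intro!: derivative_eq_intros ellip_F_deriv[OF k] DERIV_chain2[OF ellip_F_deriv[OF k]] simp: eg_even)
  thus ?thesis by (simp add: ellip_F_0)
qed

lemma ellip_F_le: assumes k: "k\<^sup>2 < 1" and "x \<le> 0" shows "ellip_F x k \<le> x"
  using ellip_F_ge[OF k, of "-x"] assms ellip_F_odd[OF k, of x] by simp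

lemma ellip_F_shift: assumes k: "k\<^sup>2 < 1"
  shows "ellip_F (x + pi) k = ellip_F x k + 2 * ellip_K k"
proof -
  have c1: "(\<lambda>p. ellip_F (p + pi) k - ellip_F p k) x = (\<lambda>p. ellip_F (p + pi) k - ellip_F p k) 0"
    by (rule DERIV_isconst_all)
       (auto intro!: derivative_eq_intros ellip_F_deriv[OF k] DERIV_chain2[OF ellip_F_deriv[OF k]] simp: eg_pi)
  have c2: "(\<lambda>t. ellip_F (pi/2 + t) k + ellip_F (pi/2 - t) k) (pi/2) = (\<lambda>t. ellip_F (pi/2 + t) k + ellip_F (pi/2 - t) k) 0"
    by (rule DERIV_isconst_all)
       (auto intro!: derivative_eq_intros ellip_F_deriv[OF k] DERIV_chain2[OF ellip_F_deriv[OF k]] simp: eg_refl)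
  show ?thesis using c1 c2 by (simp add: ellip_F_0 ellip_K_def)
qed

lemma ellip_F_surj: assumes k: "k\<^sup>2 < 1" shows "\<exists>p. ellip_F p k = u"
proof (cases "0 \<le> u")
  case True
  have "\<exists>x\<ge>0. x \<le> u \<and> ellip_F x k = u"
    by (rule IVT) (use True ellip_F_ge[OF k True] ellip_F_cont[OF k] in \<open>auto simp: ellip_F_0\<close>)
  thus ?thesis by blast
next
  case False
  have "\<exists>x\<ge>u. x \<le> 0 \<and> ellip_F x k = u"
    by (rule IVT) (use False ellip_F_le[OF k, of u] ellip_F_cont[OF k] in \<open>auto simp: ellip_F_0\<close>)
  thus ?thesis by blast
qed

lemma ellip_F_inj: assumes k: "k\<^sup>2 < 1" and "ellip_F x k = ellip_F y k" shows "x = y"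
  using ellip_F_mono[OF k, of x y] ellip_F_mono[OF k, of y x] assms(2) by (cases x y rule: linorder_cases) auto

lemma am_F: assumes k: "k\<^sup>2 < 1" shows "ellip_F (jacobi_am u k) k = u"
proof -
  obtain p where "ellip_F p k = u" using ellip_F_surj[OF k] by blast
  hence "\<exists>!p. ellip_F p k = u" using ellip_F_inj[OF k] by blast
  thus ?thesis unfolding jacobi_am_def by (rule theI')
qed

lemma F_am: assumes k: "k\<^sup>2 < 1" shows "jacobi_am (ellip_F p k) k = p"
  using am_F[OF k, of "ellip_F p k"] ellip_F_inj[OF k] by blast

lemma am_mono: assumes k: "k\<^sup>2 < 1" and "u < v" shows "jacobi_am u k < jacobi_am v k"
proof (rule ccontr)
  assume "\<not> ?thesis"
  hence "jacobi_am v k \<le> jacobi_am u k" by simp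
  hence "ellip_F (jacobi_am v k) k \<le> ellip_F (jacobi_am u k) k"
    using ellip_F_mono[OF k] by (cases "jacobi_am v k = jacobi_am u k") (auto simp: less_imp_le)
  thus False using assms(2) by (simp add: am_F[OF k])
qed

lemma am_cont: assumes k: "k\<^sup>2 < 1" shows "isCont (\<lambda>u. jacobi_am u k) u"
proof -
  have "isCont (\<lambda>u. jacobi_am u k) (ellip_F (jacobi_am u k) k)"
    by (rule isCont_inverse_function[where d=1]) (auto simp: F_am[OF k] ellip_F_cont[OF k])
  thus ?thesis by (simp add: am_F[OF k])
qed

lemma am_deriv: assumes k: "k\<^sup>2 < 1"
  shows "((\<lambda>u. jacobi_am u k) has_real_derivative sqrt (1 - k\<^sup>2 * (sin (jacobi_am u k))\<^sup>2)) (at u)"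
proof -
  have "((\<lambda>u. jacobi_am u k) has_real_derivative inverse (eg k (jacobi_am u k))) (at u)"
    by (rule DERIV_inverse_function[where f="\<lambda>p. ellip_F p k" and a="u - 1" and b="u + 1"])
       (use eg_ge1[OF k, of "jacobi_am u k"] in \<open>auto simp: am_F[OF k] ellip_F_deriv[OF k] am_cont[OF k]\<close>)
  moreover have "inverse (eg k (jacobi_am u k)) = sqrt (1 - k\<^sup>2 * (sin (jacobi_am u k))\<^sup>2)"
    by (simp add: eg_def)
  ultimately show ?thesis by simp
qed

lemma am_0: "k\<^sup>2 < 1 \<Longrightarrow> jacobi_am 0 k = 0"
  using F_am[of k 0] by (simp add: ellip_F_0)

lemma am_K: "k\<^sup>2 < 1 \<Longrightarrow> jacobi_am (ellip_K k) k = pi/2"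
  using F_am[of k "pi/2"] by (simp add: ellip_K_def)

lemma am_mK: "k\<^sup>2 < 1 \<Longrightarrow> jacobi_am (- ellip_K k) k = - pi/2"
  using F_am[of k "-pi/2"] ellip_F_odd[of k "pi/2"] by (simp add: ellip_K_def)

lemma am_shift: assumes k: "k\<^sup>2 < 1" shows "jacobi_am (u + 2 * ellip_K k) k = jacobi_am u k + pi"
proof -
  have "ellip_F (jacobi_am u k + pi) k = u + 2 * ellip_K k"
    by (simp add: ellip_F_shift[OF k] am_F[OF k])
  thus ?thesis using F_am[OF k] by metis
qed

lemma K_pos: assumes k: "k\<^sup>2 < 1" shows "0 < ellip_K k"
  using ellip_F_ge[OF k, of "pi/2"] pi_gt3 unfolding ellip_K_def by simp

lemma alg_factors:
  fixes u1 u2 u3 u4 S :: real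
  defines "D \<equiv> u2 - u4" and "E \<equiv> u2 - u3" and "A \<equiv> (u2 - u4) * (u3 - u4)"
  defines "W \<equiv> D - E * S"
  defines "M \<equiv> (u1 - u3) * D - (u1 - u4) * E * S"
  defines "R \<equiv> u4 + A / W"
  assumes W: "W \<noteq> 0"
  shows "R - u4 = A / W" "R - u3 = (u3 - u4) * E * S / W" "R - u2 = - D * E * (1 - S) / W"
        "R - u1 = - M / W"
proof -
  show "R - u4 = A / W" unfolding R_def by simp
  show "R - u3 = (u3 - u4) * E * S / W" unfolding R_def using W
    by (simp add: field_simps) (simp add: A_def W_def D_def E_def algebra_simps)
  show "R - u2 = - D * E * (1 - S) / W" unfolding R_def using W
    by (simp add: field_simps) (simp add: A_def W_def D_def E_def algebra_simps)
  show "R - u1 = - M / W" unfolding R_def using W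
    by (simp add: field_simps) (simp add: A_def W_def D_def E_def M_def algebra_simps)
qed

lemma alg1:
  fixes u1 u2 u3 u4 S :: real
  defines "D \<equiv> u2 - u4" and "E \<equiv> u2 - u3" and "A \<equiv> (u2 - u4) * (u3 - u4)"
  defines "W \<equiv> D - E * S"
  defines "M \<equiv> (u1 - u3) * D - (u1 - u4) * E * S"
  defines "R \<equiv> u4 + A / W"
  assumes W: "W \<noteq> 0"
  shows "2 * A * E\<^sup>2 / W ^ 3 * (S * (1 - S) * M) + A * E / W\<^sup>2 * ((1 - 2 * S) * M - S * (1 - S) * (u1 - u4) * E) / 2
     = ((R - u2) * (R - u3) * (R - u4) + (R - u1) * (R - u3) * (R - u4) + (R - u1) * (R - u2) * (R - u4) + (R - u1) * (R - u2) * (R - u3)) / 2" (is "?lhs = ?rhs")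
proof -
  have f4: "R - u4 = A / W" unfolding R_def by simp
  have f3: "R - u3 = (u3 - u4) * E * S / W" unfolding R_def using W
    by (simp add: field_simps) (simp add: A_def W_def D_def E_def algebra_simps)
  have f2: "R - u2 = - D * E * (1 - S) / W" unfolding R_def using W
    by (simp add: field_simps) (simp add: A_def W_def D_def E_def algebra_simps)
  have f1: "R - u1 = - M / W" unfolding R_def using W
    by (simp add: field_simps) (simp add: A_def W_def D_def E_def M_def algebra_simps)
  note f = f1 f2 f3 f4
  have "2 * A * E\<^sup>2 / W ^ 3 * (S * (1 - S) * M) + A * E / W\<^sup>2 * ((1 - 2 * S) * M - S * (1 - S) * (u1 - u4) * E) / 2
     = ((- D * E * (1 - S)) * ((u3 - u4) * E * S) * A + (- M) * ((u3 - u4) * E * S) * A + (- M) * (- D * E * (1 - S)) * A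
        + (- M) * (- D * E * (1 - S)) * ((u3 - u4) * E * S)) / W^3 / 2"
    using W apply (simp add: field_simps)
    unfolding W_def A_def M_def D_def E_def by algebra
  also have "\<dots> = ?rhs" using W apply (simp only: f) apply (simp add: field_simps) by algebra
  finally show ?thesis .
qed

lemma alg0:
  fixes u1 u2 u3 u4 S :: real
  defines "D \<equiv> u2 - u4" and "E \<equiv> u2 - u3" and "A \<equiv> (u2 - u4) * (u3 - u4)"
  defines "W \<equiv> D - E * S"
  defines "M \<equiv> (u1 - u3) * D - (u1 - u4) * E * S"
  defines "R \<equiv> u4 + A / W"
  assumes W: "W \<noteq> 0"
  shows "(A * E / W\<^sup>2)\<^sup>2 * (S * (1 - S) * M) = (R - u1) * (R - u2) * (R - u3) * (R - u4)"
proof -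
  have f4: "R - u4 = A / W" unfolding R_def by simp
  have f3: "R - u3 = (u3 - u4) * E * S / W" unfolding R_def using W
    by (simp add: field_simps) (simp add: A_def W_def D_def E_def algebra_simps)
  have f2: "R - u2 = - D * E * (1 - S) / W" unfolding R_def using W
    by (simp add: field_simps) (simp add: A_def W_def D_def E_def algebra_simps)
  have f1: "R - u1 = - M / W" unfolding R_def using W
    by (simp add: field_simps) (simp add: A_def W_def D_def E_def M_def algebra_simps)
  note f = f1 f2 f3 f4
  show ?thesis using W apply (simp only: f) apply (simp add: field_simps)
    unfolding A_def D_def by algebra
qed

lemma am_deriv_chain:
  assumes k: "k\<^sup>2 < 1" and f: "(f has_real_derivative f') (at x)"
  shows "((\<lambda>x. jacobi_am (f x) k) has_real_derivative sqrt (1 - k\<^sup>2 * (sin (jacobi_am (f x) k))\<^sup>2) * f') (at x)"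
  using DERIV_chain2[OF am_deriv[OF k] f] by simp

lemma alg_sn:
  fixes q s c k nu :: real
  assumes "q \<noteq> 0" "q\<^sup>2 = 1 - k\<^sup>2 * s\<^sup>2" "c\<^sup>2 = 1 - s\<^sup>2"
  shows "2 * nu * (c * (q * nu)) * c * q + 2 * nu * s * (- s * (q * nu)) * q
    + 2 * nu * s * c * ((- (k\<^sup>2 * (2 * s * (c * (q * nu))))) / (2 * q))
    = 2 * nu\<^sup>2 * ((1 - 2 * s\<^sup>2) * (1 - k\<^sup>2 * s\<^sup>2) - k\<^sup>2 * s\<^sup>2 * (1 - s\<^sup>2))"
proof -
  have "2 * nu * (c * (q * nu)) * c * q + 2 * nu * s * (- s * (q * nu)) * q
    + 2 * nu * s * c * ((- (k\<^sup>2 * (2 * s * (c * (q * nu))))) / (2 * q))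
    = 2 * nu\<^sup>2 * (c\<^sup>2 * q\<^sup>2 - s\<^sup>2 * q\<^sup>2 - k\<^sup>2 * s\<^sup>2 * c\<^sup>2)"
    using assms(1) by (simp add: field_simps power2_eq_square)
  also have "\<dots> = 2 * nu\<^sup>2 * ((1 - 2 * s\<^sup>2) * (1 - k\<^sup>2 * s\<^sup>2) - k\<^sup>2 * s\<^sup>2 * (1 - s\<^sup>2))"
    by (simp add: assms(2,3) algebra_simps)
  finally show ?thesis .
qed

lemma sn_derivs:
  fixes nu k :: real
  assumes k: "k\<^sup>2 < 1"
  defines "th \<equiv> \<lambda>x. jacobi_am (nu * x) k"
  shows "((\<lambda>x. (sin (th x))\<^sup>2) has_real_derivative
            2 * nu * sin (th x) * cos (th x) * sqrt (1 - k\<^sup>2 * (sin (th x))\<^sup>2)) (at x)"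
    and "((\<lambda>x. 2 * nu * sin (th x) * cos (th x) * sqrt (1 - k\<^sup>2 * (sin (th x))\<^sup>2)) has_real_derivative
            2 * nu\<^sup>2 * ((1 - 2 * (sin (th x))\<^sup>2) * (1 - k\<^sup>2 * (sin (th x))\<^sup>2) - k\<^sup>2 * (sin (th x))\<^sup>2 * (1 - (sin (th x))\<^sup>2))) (at x)"
proof -
  have dth: "\<And>x. (th has_real_derivative sqrt (1 - k\<^sup>2 * (sin (th x))\<^sup>2) * nu) (at x)"
    unfolding th_def by (rule am_deriv_chain[OF k]) (auto intro!: derivative_eq_intros)
  have pos: "\<And>x. 0 < 1 - k\<^sup>2 * (sin (th x))\<^sup>2" by (rule eg_rad_pos[OF k])
  show "((\<lambda>x. (sin (th x))\<^sup>2) has_real_derivative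
            2 * nu * sin (th x) * cos (th x) * sqrt (1 - k\<^sup>2 * (sin (th x))\<^sup>2)) (at x)"
    by (rule derivative_eq_intros dth refl | simp)+
  have "((\<lambda>x. 2 * nu * sin (th x) * cos (th x) * sqrt (1 - k\<^sup>2 * (sin (th x))\<^sup>2)) has_real_derivative
    2 * nu * (cos (th x) * (sqrt (1 - k\<^sup>2 * (sin (th x))\<^sup>2) * nu)) * cos (th x) * sqrt (1 - k\<^sup>2 * (sin (th x))\<^sup>2)
    + 2 * nu * sin (th x) * (- sin (th x) * (sqrt (1 - k\<^sup>2 * (sin (th x))\<^sup>2) * nu)) * sqrt (1 - k\<^sup>2 * (sin (th x))\<^sup>2)
    + 2 * nu * sin (th x) * cos (th x) * ((- (k\<^sup>2 * (2 * sin (th x) * (cos (th x) * (sqrt (1 - k\<^sup>2 * (sin (th x))\<^sup>2) * nu))))) / (2 * sqrt (1 - k\<^sup>2 * (sin (th x))\<^sup>2)))) (at x)"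
    using pos[of x]
    by (auto intro!: derivative_eq_intros dth simp: power2_eq_square algebra_simps)
  moreover have "2 * nu * (cos (th x) * (sqrt (1 - k\<^sup>2 * (sin (th x))\<^sup>2) * nu)) * cos (th x) * sqrt (1 - k\<^sup>2 * (sin (th x))\<^sup>2)
    + 2 * nu * sin (th x) * (- sin (th x) * (sqrt (1 - k\<^sup>2 * (sin (th x))\<^sup>2) * nu)) * sqrt (1 - k\<^sup>2 * (sin (th x))\<^sup>2)
    + 2 * nu * sin (th x) * cos (th x) * ((- (k\<^sup>2 * (2 * sin (th x) * (cos (th x) * (sqrt (1 - k\<^sup>2 * (sin (th x))\<^sup>2) * nu))))) / (2 * sqrt (1 - k\<^sup>2 * (sin (th x))\<^sup>2)))
    = 2 * nu\<^sup>2 * ((1 - 2 * (sin (th x))\<^sup>2) * (1 - k\<^sup>2 * (sin (th x))\<^sup>2) - k\<^sup>2 * (sin (th x))\<^sup>2 * (1 - (sin (th x))\<^sup>2))"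
    by (rule alg_sn) (use pos[of x] in \<open>auto simp: cos_squared_eq\<close>)
  ultimately show "((\<lambda>x. 2 * nu * sin (th x) * cos (th x) * sqrt (1 - k\<^sup>2 * (sin (th x))\<^sup>2)) has_real_derivative
            2 * nu\<^sup>2 * ((1 - 2 * (sin (th x))\<^sup>2) * (1 - k\<^sup>2 * (sin (th x))\<^sup>2) - k\<^sup>2 * (sin (th x))\<^sup>2 * (1 - (sin (th x))\<^sup>2))) (at x)"
    by simp
qed

lemma quad_zero:
  fixes a0 a1 a2 x1 x2 x3 :: real
  assumes d: "x1 \<noteq> x2" "x1 \<noteq> x3" "x2 \<noteq> x3"
    and z: "a2 * x1^2 + a1 * x1 + a0 = 0" "a2 * x2^2 + a1 * x2 + a0 = 0" "a2 * x3^2 + a1 * x3 + a0 = 0"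
  shows "a2 = 0 \<and> a1 = 0 \<and> a0 = 0"
proof -
  have h12: "a2 * (x1 + x2) + a1 = 0"
  proof -
    have "(x1 - x2) * (a2 * (x1 + x2) + a1) = 0" using z(1,2) by (simp add: algebra_simps power2_eq_square)
    thus ?thesis using d by simp
  qed
  have h13: "a2 * (x1 + x3) + a1 = 0"
  proof -
    have "(x1 - x3) * (a2 * (x1 + x3) + a1) = 0" using z(1,3) by (simp add: algebra_simps power2_eq_square)
    thus ?thesis using d by simp
  qed
  have "(x2 - x3) * a2 = (a2 * (x1 + x2) + a1) - (a2 * (x1 + x3) + a1)" by (simp add: algebra_simps)
  hence "(x2 - x3) * a2 = 0" using h12 h13 by simp
  hence a2: "a2 = 0" using d by simp
  hence "a1 = 0" using h12 by simp
  thus ?thesis using a2 z(1) by simp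
qed

lemma cubic_zero:
  fixes a0 a1 a2 a3 x1 x2 x3 x4 :: real
  assumes d: "x1 \<noteq> x2" "x1 \<noteq> x3" "x1 \<noteq> x4" "x2 \<noteq> x3" "x2 \<noteq> x4" "x3 \<noteq> x4"
    and z: "a3 * x1^3 + a2 * x1^2 + a1 * x1 + a0 = 0" "a3 * x2^3 + a2 * x2^2 + a1 * x2 + a0 = 0"
           "a3 * x3^3 + a2 * x3^2 + a1 * x3 + a0 = 0" "a3 * x4^3 + a2 * x4^2 + a1 * x4 + a0 = 0"
  shows "a3 = 0 \<and> a2 = 0 \<and> a1 = 0 \<and> a0 = 0"
proof -
  have q: "a3 * x^2 + (a2 + a3 * x1) * x + (a1 + a2 * x1 + a3 * x1^2) = 0" if "x \<noteq> x1"
    "a3 * x^3 + a2 * x^2 + a1 * x + a0 = 0" for x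
  proof -
    have "(x - x1) * (a3 * x^2 + (a2 + a3 * x1) * x + (a1 + a2 * x1 + a3 * x1^2)) = 0"
      using that(2) z(1) by (simp add: algebra_simps power2_eq_square power3_eq_cube)
    thus ?thesis using that(1) by simp
  qed
  have "a3 = 0 \<and> a2 + a3 * x1 = 0 \<and> a1 + a2 * x1 + a3 * x1^2 = 0"
    by (rule quad_zero[of x2 x3 x4]) (use d z q in auto)
  thus ?thesis using z(1) by auto
qed

definition e2 :: "real \<Rightarrow> real \<Rightarrow> real \<Rightarrow> real \<Rightarrow> real" where
  "e2 u1 u2 u3 u4 = u1*u2 + u1*u3 + u1*u4 + u2*u3 + u2*u4 + u3*u4"
definition e3 :: "real \<Rightarrow> real \<Rightarrow> real \<Rightarrow> real \<Rightarrow> real" where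
  "e3 u1 u2 u3 u4 = u1*u2*u3 + u1*u2*u4 + u1*u3*u4 + u2*u3*u4"

lemma quartic_vieta:
  fixes b c d u1 u2 u3 u4 :: real
  assumes dd: "u1 \<noteq> u2" "u1 \<noteq> u3" "u1 \<noteq> u4" "u2 \<noteq> u3" "u2 \<noteq> u4" "u3 \<noteq> u4"
    and z: "Qpoly b c d u1 = 0" "Qpoly b c d u2 = 0" "Qpoly b c d u3 = 0" "Qpoly b c d u4 = 0"
  shows "u1 + u2 + u3 + u4 = 0 \<and> e2 u1 u2 u3 u4 = - c \<and> e3 u1 u2 u3 u4 = - 2 * b \<and> u1*u2*u3*u4 = 2 * d"
proof -
  have key: "(u1 + u2 + u3 + u4) * x^3 + (- c - e2 u1 u2 u3 u4) * x^2 + (2 * b + e3 u1 u2 u3 u4) * x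
      + (2 * d - u1*u2*u3*u4) = Qpoly b c d x - (x - u1) * (x - u2) * (x - u3) * (x - u4)" for x
    unfolding Qpoly_def e2_def e3_def by (simp add: algebra_simps power2_eq_square power3_eq_cube power4_eq_xxxx)
  have "u1 + u2 + u3 + u4 = 0 \<and> - c - e2 u1 u2 u3 u4 = 0 \<and> 2 * b + e3 u1 u2 u3 u4 = 0 \<and> 2 * d - u1*u2*u3*u4 = 0"
    by (rule cubic_zero[OF dd]) (simp_all only: key z, simp_all)
  thus ?thesis by auto
qed

lemma quartic_factor:
  fixes b c d u1 u2 u3 u4 :: real
  assumes dd: "u1 \<noteq> u2" "u1 \<noteq> u3" "u1 \<noteq> u4" "u2 \<noteq> u3" "u2 \<noteq> u4" "u3 \<noteq> u4"
    and z: "Qpoly b c d u1 = 0" "Qpoly b c d u2 = 0" "Qpoly b c d u3 = 0" "Qpoly b c d u4 = 0"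
  shows "Qpoly b c d x = (x - u1) * (x - u2) * (x - u3) * (x - u4)"
proof -
  note v = quartic_vieta[OF dd z]
  have "Qpoly b c d x - (x - u1) * (x - u2) * (x - u3) * (x - u4) =
    (u1 + u2 + u3 + u4) * x^3 + (- c - e2 u1 u2 u3 u4) * x^2 + (2 * b + e3 u1 u2 u3 u4) * x
      + (2 * d - u1*u2*u3*u4)"
    unfolding Qpoly_def e2_def e3_def by (simp add: algebra_simps power2_eq_square power3_eq_cube power4_eq_xxxx)
  also have "\<dots> = 0" using v by simp
  finally show ?thesis by simp
qed

lemma quartic_roots:
  fixes b c d u1 u2 u3 u4 :: real
  assumes dd: "u1 \<noteq> u2" "u1 \<noteq> u3" "u1 \<noteq> u4" "u2 \<noteq> u3" "u2 \<noteq> u4" "u3 \<noteq> u4"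
    and z: "Qpoly b c d u1 = 0" "Qpoly b c d u2 = 0" "Qpoly b c d u3 = 0" "Qpoly b c d u4 = 0"
  shows "{p. Qpoly b c d p = 0} = {u1, u2, u3, u4}" "card {p. Qpoly b c d p = 0} = 4"
proof -
  show e: "{p. Qpoly b c d p = 0} = {u1, u2, u3, u4}"
    by (auto simp: quartic_factor[OF dd z] z)
  show "card {p. Qpoly b c d p = 0} = 4" unfolding e using dd by auto
qed

lemma cubic_factor:
  fixes b c w1 w2 w3 :: real
  assumes dd: "w1 \<noteq> w2" "w1 \<noteq> w3" "w2 \<noteq> w3"
    and z: "2 * w1^3 - c * w1 + b = 0" "2 * w2^3 - c * w2 + b = 0" "2 * w3^3 - c * w3 + b = 0"
  shows "2 * x^3 - c * x + b = 2 * (x - w1) * (x - w2) * (x - w3)"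
proof -
  have key: "(2 * (w1 + w2 + w3)) * y^2 + (- c - 2 * (w1*w2 + w1*w3 + w2*w3)) * y + (b + 2 * w1*w2*w3)
     = (2 * y^3 - c * y + b) - 2 * (y - w1) * (y - w2) * (y - w3)" for y
    by (simp add: algebra_simps power2_eq_square power3_eq_cube)
  have "2 * (w1 + w2 + w3) = 0 \<and> - c - 2 * (w1*w2 + w1*w3 + w2*w3) = 0 \<and> b + 2 * w1*w2*w3 = 0"
    by (rule quad_zero[OF dd]) (simp_all only: key z, simp_all)
  hence "(2 * x^3 - c * x + b) - 2 * (x - w1) * (x - w2) * (x - w3) = 0"
    using key[of x] by simp
  thus ?thesis by simp
qed

lemma vieta_deriv:
  fixes b c d u1 u2 u3 u4 p :: real
  assumes "u1 + u2 + u3 + u4 = 0 \<and> e2 u1 u2 u3 u4 = - c \<and> e3 u1 u2 u3 u4 = - 2 * b \<and> u1*u2*u3*u4 = 2 * d"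
  shows "((p - u2) * (p - u3) * (p - u4) + (p - u1) * (p - u3) * (p - u4) + (p - u1) * (p - u2) * (p - u4) + (p - u1) * (p - u2) * (p - u3)) / 2
    = 2 * p^3 - c * p + b"
proof -
  have u1: "u1 = - u2 - u3 - u4" using assms by linarith
  have c: "c = - e2 u1 u2 u3 u4" and b: "b = - e3 u1 u2 u3 u4 / 2" using assms by auto
  show ?thesis unfolding c b e2_def e3_def u1 by (simp add: divide_simps) (simp add: algebra_simps power2_eq_square power3_eq_cube)
qed

lemma R_deriv:
  fixes A D E u4 :: real
  assumes "(g has_real_derivative g') (at x)" "D - E * g x \<noteq> 0"
  shows "((\<lambda>x. u4 + A / (D - E * g x)) has_real_derivative A * E / (D - E * g x)\<^sup>2 * g') (at x)"
  using assms by (auto intro!: derivative_eq_intros simp: power2_eq_square field_simps)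

lemma phi_solution:
  fixes b c d u1 u2 u3 u4 :: real
  assumes ord: "u4 < u3" "u3 < u2" "u2 < u1"
    and roots: "{p. Qpoly b c d p = 0} = {u1, u2, u3, u4}"
  defines "nu \<equiv> sqrt ((u1 - u3) * (u2 - u4)) / 2"
    and "k \<equiv> sqrt (((u1 - u4) * (u2 - u3)) / ((u1 - u3) * (u2 - u4)))"
  defines "\<phi> \<equiv> (\<lambda>x. u4 + ((u2 - u4) * (u3 - u4)) / ((u2 - u4) - (u2 - u3) * (jacobi_sn (nu * x) k)\<^sup>2))"
  shows "is_solution b c d \<phi>"
proof -
  define D where "D = u2 - u4"
  define E where "E = u2 - u3"
  define A where "A = (u2 - u4) * (u3 - u4)"
  have z: "Qpoly b c d u1 = 0" "Qpoly b c d u2 = 0" "Qpoly b c d u3 = 0" "Qpoly b c d u4 = 0"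
    using roots by auto
  have dd: "u1 \<noteq> u2" "u1 \<noteq> u3" "u1 \<noteq> u4" "u2 \<noteq> u3" "u2 \<noteq> u4" "u3 \<noteq> u4" using ord by auto
  note vieta = quartic_vieta[OF dd z]
  note fac = quartic_factor[OF dd z]
  have Dpos: "D > 0" and Epos: "E > 0" and ED: "E < D" using ord by (auto simp: D_def E_def)
  have P: "(u1 - u3) * D > 0" using ord Dpos by simp
  have k2: "k\<^sup>2 = ((u1 - u4) * E) / ((u1 - u3) * D)"
    unfolding k_def D_def E_def using ord by (simp add: zero_le_mult_iff)
  have k1: "k\<^sup>2 < 1"
  proof -
    have "(u1 - u3) * D - (u1 - u4) * E = (u1 - u2) * (u3 - u4)" by (simp add: D_def E_def algebra_simps)
    also have "\<dots> > 0" using ord by simp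
    finally show ?thesis unfolding k2 using P by (simp add: field_simps)
  qed
  have nu2: "4 * nu\<^sup>2 = (u1 - u3) * D" unfolding nu_def D_def using ord
    by (simp add: power_divide zero_le_mult_iff)
  have P': "(u1 - u3) * D \<noteq> 0" using P by (metis less_irrefl)
  have nuk: "4 * nu\<^sup>2 * k\<^sup>2 = (u1 - u4) * E"
  proof -
    have "4 * nu\<^sup>2 * k\<^sup>2 = (u1 - u3) * D * ((u1 - u4) * E / ((u1 - u3) * D))" by (simp add: nu2 k2)
    also have "\<dots> = (u1 - u4) * E" using P' by simp
    finally show ?thesis .
  qed
  define th where "th = (\<lambda>x. jacobi_am (nu * x) k)"
  define S where "S = (\<lambda>x. (sin (th x))\<^sup>2)"
  define s1 where "s1 = (\<lambda>x. 2 * nu * sin (th x) * cos (th x) * sqrt (1 - k\<^sup>2 * (sin (th x))\<^sup>2))"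
  define M where "M = (\<lambda>x. (u1 - u3) * D - (u1 - u4) * E * S x)"
  define W where "W = (\<lambda>x. D - E * S x)"
  have phi_eq: "\<phi> = (\<lambda>x. u4 + A / (D - E * S x))"
    unfolding \<phi>_def S_def th_def jacobi_sn_def A_def D_def E_def by simp
  have S01: "0 \<le> S x" "S x \<le> 1" for x unfolding S_def by (auto simp: abs_square_le_1)
  have Wpos: "W x > 0" for x
  proof -
    have "E * S x \<le> E" using S01[of x] Epos by (simp add: mult_left_le)
    thus ?thesis unfolding W_def using ED by linarith
  qed
  have dS: "(S has_real_derivative s1 x) (at x)" for x
    unfolding S_def s1_def th_def by (rule sn_derivs(1)[OF k1])
  have ds1: "(s1 has_real_derivative ((1 - 2 * S x) * M x - S x * (1 - S x) * (u1 - u4) * E) / 2) (at x)" for x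
  proof -
    have "(s1 has_real_derivative 2 * nu\<^sup>2 * ((1 - 2 * S x) * (1 - k\<^sup>2 * S x) - k\<^sup>2 * S x * (1 - S x))) (at x)"
      unfolding S_def s1_def th_def by (rule sn_derivs(2)[OF k1])
    moreover have "2 * nu\<^sup>2 * ((1 - 2 * S x) * (1 - k\<^sup>2 * S x) - k\<^sup>2 * S x * (1 - S x))
       = ((1 - 2 * S x) * M x - S x * (1 - S x) * (u1 - u4) * E) / 2"
    proof -
      have "2 * nu\<^sup>2 * ((1 - 2 * S x) * (1 - k\<^sup>2 * S x) - k\<^sup>2 * S x * (1 - S x))
        = ((1 - 2 * S x) * (4 * nu\<^sup>2 - 4 * nu\<^sup>2 * k\<^sup>2 * S x) - S x * (1 - S x) * (4 * nu\<^sup>2 * k\<^sup>2)) / 2"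
        by (simp add: algebra_simps)
      also have "\<dots> = ((1 - 2 * S x) * M x - S x * (1 - S x) * (u1 - u4) * E) / 2"
        unfolding nuk unfolding nu2 M_def by (simp add: algebra_simps)
      finally show ?thesis .
    qed
    ultimately show ?thesis by simp
  qed
  have s1sq: "(s1 x)\<^sup>2 = S x * (1 - S x) * M x" for x
  proof -
    have pos: "0 < 1 - k\<^sup>2 * (sin (th x))\<^sup>2" by (rule eg_rad_pos[OF k1])
    have "(s1 x)\<^sup>2 = 4 * nu\<^sup>2 * (sin (th x))\<^sup>2 * (cos (th x))\<^sup>2 * (1 - k\<^sup>2 * (sin (th x))\<^sup>2)"
      unfolding s1_def using pos by (simp add: power_mult_distrib)
    also have "\<dots> = S x * (1 - S x) * (4 * nu\<^sup>2 - 4 * nu\<^sup>2 * k\<^sup>2 * S x)"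
      unfolding S_def by (simp add: cos_squared_eq algebra_simps)
    also have "\<dots> = S x * (1 - S x) * M x" unfolding nuk unfolding nu2 M_def by (simp add: algebra_simps)
    finally show ?thesis .
  qed
  define \<phi>1 where "\<phi>1 = (\<lambda>x. A * E / (D - E * S x)\<^sup>2 * s1 x)"
  define \<phi>2 where "\<phi>2 = (\<lambda>x. 2 * (\<phi> x)^3 - c * \<phi> x + b)"
  define \<phi>3 where "\<phi>3 = (\<lambda>x. (6 * (\<phi> x)\<^sup>2 - c) * \<phi>1 x)"
  have d1: "(\<phi> has_real_derivative \<phi>1 x) (at x)" for x
    unfolding phi_eq \<phi>1_def by (rule R_deriv[OF dS]) (use Wpos[of x] in \<open>simp add: W_def\<close>)
  have d2: "(\<phi>1 has_real_derivative \<phi>2 x) (at x)" for x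
  proof -
    have Wx: "D - E * S x \<noteq> 0" using Wpos[of x] by (simp add: W_def)
    have "(\<phi>1 has_real_derivative 2 * A * E\<^sup>2 / (D - E * S x) ^ 3 * (S x * (1 - S x) * M x)
       + A * E / (D - E * S x)\<^sup>2 * ((1 - 2 * S x) * M x - S x * (1 - S x) * (u1 - u4) * E) / 2) (at x)"
    proof -
      have "(\<phi>1 has_real_derivative 2 * A * E\<^sup>2 / (D - E * S x) ^ 3 * (s1 x)\<^sup>2
         + A * E / (D - E * S x)\<^sup>2 * ((1 - 2 * S x) * M x - S x * (1 - S x) * (u1 - u4) * E) / 2) (at x)"
      proof -
        obtain w where w: "D - E * S x = w" by simp
        have wnz: "w \<noteq> 0" using Wx w by simp
        show ?thesis
          apply (rule DERIV_cong)
           apply (unfold \<phi>1_def)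
           apply (rule derivative_eq_intros dS ds1 refl)+
          apply (unfold w)
          apply (simp add: wnz)
          apply (rule refl ds1)+
          using wnz by (simp add: field_simps power2_eq_square power3_eq_cube)
      qed
      thus ?thesis by (simp add: s1sq)
    qed
    moreover have "2 * A * E\<^sup>2 / (D - E * S x) ^ 3 * (S x * (1 - S x) * M x)
       + A * E / (D - E * S x)\<^sup>2 * ((1 - 2 * S x) * M x - S x * (1 - S x) * (u1 - u4) * E) / 2 = \<phi>2 x"
    proof -
      have "2 * A * E\<^sup>2 / (D - E * S x) ^ 3 * (S x * (1 - S x) * M x)
       + A * E / (D - E * S x)\<^sup>2 * ((1 - 2 * S x) * M x - S x * (1 - S x) * (u1 - u4) * E) / 2
       = (((\<phi> x) - u2) * ((\<phi> x) - u3) * ((\<phi> x) - u4) + ((\<phi> x) - u1) * ((\<phi> x) - u3) * ((\<phi> x) - u4) + ((\<phi> x) - u1) * ((\<phi> x) - u2) * ((\<phi> x) - u4) + ((\<phi> x) - u1) * ((\<phi> x) - u2) * ((\<phi> x) - u3)) / 2"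
        using alg1[of u2 u4 u3 "S x" u1] Wx unfolding phi_eq A_def D_def E_def M_def by simp
      also have "\<dots> = \<phi>2 x" unfolding \<phi>2_def by (rule vieta_deriv[OF vieta])
      finally show ?thesis .
    qed
    ultimately show ?thesis by simp
  qed
  have d3: "(\<phi>2 has_real_derivative \<phi>3 x) (at x)" for x
    unfolding \<phi>2_def \<phi>3_def
    by (auto intro!: derivative_eq_intros d1 simp: power2_eq_square algebra_simps)
  have e1: "(\<phi>1 x)\<^sup>2 = Qpoly b c d (\<phi> x)" for x
  proof -
    have Wx: "D - E * S x \<noteq> 0" using Wpos[of x] by (simp add: W_def)
    have "(\<phi>1 x)\<^sup>2 = (A * E / (D - E * S x)\<^sup>2)\<^sup>2 * (S x * (1 - S x) * M x)"
      unfolding \<phi>1_def s1sq[symmetric] by (rule power_mult_distrib)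
    also have "\<dots> = (\<phi> x - u1) * (\<phi> x - u2) * (\<phi> x - u3) * (\<phi> x - u4)"
      using alg0[of u2 u4 u3 "S x" u1] Wx unfolding phi_eq A_def D_def E_def M_def by simp
    also have "\<dots> = Qpoly b c d (\<phi> x)" by (simp add: fac)
    finally show ?thesis .
  qed
  show ?thesis unfolding is_solution_def
    by (rule exI[of _ \<phi>1], rule exI[of _ \<phi>2], rule exI[of _ \<phi>3])
       (use d1 d2 d3 e1 in \<open>auto simp: \<phi>2_def[symmetric] \<phi>3_def[symmetric]\<close>, auto simp: \<phi>2_def \<phi>3_def algebra_simps)
qed

lemma phi_props:
  fixes b c d u1 u2 u3 u4 :: real
  assumes ord: "u4 < u3" "u3 < u2" "u2 < u1"
  defines "nu \<equiv> sqrt ((u1 - u3) * (u2 - u4)) / 2"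
    and "k \<equiv> sqrt (((u1 - u4) * (u2 - u3)) / ((u1 - u3) * (u2 - u4)))"
  defines "\<phi> \<equiv> (\<lambda>x. u4 + ((u2 - u4) * (u3 - u4)) / ((u2 - u4) - (u2 - u3) * (jacobi_sn (nu * x) k)\<^sup>2))"
  shows "\<phi> 0 = u3" "\<phi> (ellip_K k / nu) = u2" "\<phi> (- ellip_K k / nu) = u2"
    "\<And>x. u3 \<le> \<phi> x \<and> \<phi> x \<le> u2"
    "fundamental_period \<phi> (2 * ellip_K k / nu)"
    "bounded (range \<phi>)" "periodic_fun \<phi>" "nonconstant \<phi>" "nu > 0"
proof -
  define D where "D = u2 - u4"
  define E where "E = u2 - u3"
  define A where "A = (u2 - u4) * (u3 - u4)"
  have Dpos: "D > 0" and Epos: "E > 0" and ED: "E < D" using ord by (auto simp: D_def E_def)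
  have P: "(u1 - u3) * D > 0" using ord Dpos by simp
  have k2: "k\<^sup>2 = ((u1 - u4) * E) / ((u1 - u3) * D)"
    unfolding k_def D_def E_def using ord by (simp add: zero_le_mult_iff)
  have k1: "k\<^sup>2 < 1"
  proof -
    have "(u1 - u3) * D - (u1 - u4) * E = (u1 - u2) * (u3 - u4)" by (simp add: D_def E_def algebra_simps)
    also have "\<dots> > 0" using ord by simp
    finally show ?thesis unfolding k2 using P by (simp add: field_simps)
  qed
  show nupos: "nu > 0" unfolding nu_def using ord by simp
  define S where "S = (\<lambda>x. (sin (jacobi_am (nu * x) k))\<^sup>2)"
  define R where "R = (\<lambda>s. u4 + A / (D - E * s))"
  have phi_eq: "\<phi> x = R (S x)" for x
    unfolding \<phi>_def S_def R_def jacobi_sn_def A_def D_def E_def by simp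
  have S01: "0 \<le> S x" "S x \<le> 1" for x unfolding S_def by (auto simp: abs_square_le_1)
  have W: "D - E * s > 0" if "s \<le> 1" for s
  proof -
    have "E * s \<le> E" using that Epos by simp
    thus ?thesis using ED by linarith
  qed
  have R3: "R s - u3 = (u3 - u4) * E * s / (D - E * s)" if "s \<le> 1" for s
    unfolding R_def using W[OF that] by (simp add: field_simps) (simp add: A_def D_def E_def algebra_simps)
  have R2: "u2 - R s = D * E * (1 - s) / (D - E * s)" if "s \<le> 1" for s
    unfolding R_def using W[OF that] by (simp add: field_simps) (simp add: A_def D_def E_def algebra_simps)
  have Rb: "u3 \<le> R s \<and> R s \<le> u2" if "0 \<le> s" "s \<le> 1" for s
  proof -
    have "0 \<le> (u3 - u4) * E * s / (D - E * s)" using that W[OF that(2)] Epos ord by simp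
    moreover have "0 \<le> D * E * (1 - s) / (D - E * s)" using that W[OF that(2)] Epos Dpos by simp
    ultimately show ?thesis using R3[OF that(2)] R2[OF that(2)] by linarith
  qed
  show bnd: "u3 \<le> \<phi> x \<and> \<phi> x \<le> u2" for x using Rb[OF S01] phi_eq by simp
  have R0: "R 0 = u3" using R3[of 0] by simp
  have R1: "R 1 = u2" using R2[of 1] by simp
  have R3z: "s = 0" if "R s = u3" "s \<le> 1" for s
    using R3[OF that(2)] that W[OF that(2)] Epos ord by simp
  show p0: "\<phi> 0 = u3" unfolding phi_eq S_def by (simp add: am_0[OF k1] R0)
  show pK: "\<phi> (ellip_K k / nu) = u2" unfolding phi_eq S_def using nupos by (simp add: am_K[OF k1] R1)
  show "\<phi> (- ellip_K k / nu) = u2" unfolding phi_eq S_def using nupos by (simp add: am_mK[OF k1] R1)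
  have Kpos: "ellip_K k > 0" by (rule K_pos[OF k1])
  have per: "\<phi> (x + 2 * ellip_K k / nu) = \<phi> x" for x
  proof -
    have "nu * (x + 2 * ellip_K k / nu) = nu * x + 2 * ellip_K k" using nupos by (simp add: field_simps)
    thus ?thesis unfolding phi_eq S_def by (simp add: am_shift[OF k1])
  qed
  show "fundamental_period \<phi> (2 * ellip_K k / nu)"
    unfolding fundamental_period_def
  proof (intro conjI allI impI per)
    show "0 < 2 * ellip_K k / nu" using Kpos nupos by simp
    fix T assume T: "0 < T \<and> T < 2 * ellip_K k / nu"
    show "\<not> (\<forall>x. \<phi> (x + T) = \<phi> x)"
    proof
      assume "\<forall>x. \<phi> (x + T) = \<phi> x"
      hence "\<phi> T = u3" using p0 by (metis add_0)
      hence "S T = 0" using R3z S01 phi_eq by simp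
      hence "sin (jacobi_am (nu * T) k) = 0" unfolding S_def by simp
      moreover have "0 < jacobi_am (nu * T) k"
        using am_mono[OF k1, of 0 "nu * T"] am_0[OF k1] T nupos by simp
      moreover have "jacobi_am (nu * T) k < pi"
      proof -
        have "nu * T < 2 * ellip_K k" using T nupos by (simp add: field_simps)
        hence "jacobi_am (nu * T) k < jacobi_am (0 + 2 * ellip_K k) k" using am_mono[OF k1] by simp
        thus ?thesis by (simp add: am_shift[OF k1] am_0[OF k1] del: add_0)
      qed
      ultimately show False using sin_gt_zero by fastforce
    qed
  qed
  show "bounded (range \<phi>)"
    by (rule bounded_subset[OF bounded_closed_interval[of u3 u2]]) (use bnd in auto)
  show "periodic_fun \<phi>" unfolding periodic_fun_def
    using per Kpos nupos by (intro exI[of _ "2 * ellip_K k / nu"]) auto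
  show "nonconstant \<phi>" unfolding nonconstant_def using p0 pK ord by force
qed

lemma q_bound:
  fixes y z B c :: real
  assumes "\<bar>y\<bar> \<le> B" "\<bar>z\<bar> \<le> B"
  shows "\<bar>2 * (y\<^sup>2 + y * z + z\<^sup>2) - c\<bar> \<le> 6 * B\<^sup>2 + \<bar>c\<bar>"
proof -
  have "y\<^sup>2 \<le> B\<^sup>2" using assms(1) by (metis abs_le_square_iff abs_of_nonneg abs_ge_zero order_trans)
  moreover have "z\<^sup>2 \<le> B\<^sup>2" using assms(2) by (metis abs_le_square_iff abs_of_nonneg abs_ge_zero order_trans)
  moreover have "\<bar>y * z\<bar> \<le> B\<^sup>2"
  proof -
    have "\<bar>y * z\<bar> = \<bar>y\<bar> * \<bar>z\<bar>" by (simp add: abs_mult)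
    also have "\<dots> \<le> B * B" using assms by (intro mult_mono) auto
    finally show ?thesis by (simp add: power2_eq_square)
  qed
  ultimately show ?thesis by (simp add: abs_le_iff) (smt (verit) zero_le_power2 abs_le_iff)
qed

lemma ode_unique:
  fixes y z yd zd :: "real \<Rightarrow> real" and B b c x0 :: real
  assumes dy: "\<And>x. (y has_real_derivative yd x) (at x)"
    and dy1: "\<And>x. (yd has_real_derivative (2 * (y x)^3 - c * y x + b)) (at x)"
    and dz: "\<And>x. (z has_real_derivative zd x) (at x)"
    and dz1: "\<And>x. (zd has_real_derivative (2 * (z x)^3 - c * z x + b)) (at x)"
    and hby: "\<And>x. \<bar>y x\<bar> \<le> B" and hbz: "\<And>x. \<bar>z x\<bar> \<le> B"
    and i0: "y x0 = z x0" and i1: "yd x0 = zd x0"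
  shows "y x = z x"
proof -
  define C where "C = 1 + (6 * B\<^sup>2 + \<bar>c\<bar>)"
  define e where "e = (\<lambda>t. (y t - z t)\<^sup>2 + (yd t - zd t)\<^sup>2)"
  define e' where "e' = (\<lambda>t. 2 * (y t - z t) * (yd t - zd t) * (1 + (2 * ((y t)\<^sup>2 + y t * z t + (z t)\<^sup>2) - c)))"
  have de: "(e has_real_derivative e' t) (at t)" for t
  proof -
    have "(e has_real_derivative 2 * (y t - z t) * (yd t - zd t)
       + 2 * (yd t - zd t) * ((2 * (y t)^3 - c * y t + b) - (2 * (z t)^3 - c * z t + b))) (at t)"
      unfolding e_def by (auto intro!: derivative_eq_intros dy dy1 dz dz1 simp: algebra_simps)
    moreover have "2 * (y t - z t) * (yd t - zd t)
       + 2 * (yd t - zd t) * ((2 * (y t)^3 - c * y t + b) - (2 * (z t)^3 - c * z t + b)) = e' t"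
      unfolding e'_def by (simp add: algebra_simps power2_eq_square power3_eq_cube)
    ultimately show ?thesis by simp
  qed
  have eb: "\<bar>e' t\<bar> \<le> C * e t" for t
  proof -
    define a where "a = y t - z t"
    define d where "d = yd t - zd t"
    define q where "q = 2 * ((y t)\<^sup>2 + y t * z t + (z t)\<^sup>2) - c"
    have q: "\<bar>q\<bar> \<le> 6 * B\<^sup>2 + \<bar>c\<bar>" unfolding q_def by (rule q_bound[OF hby hbz])
    have ee: "e' t = 2 * a * d * (1 + q)" unfolding e'_def a_def d_def q_def by simp
    have "\<bar>e' t\<bar> = (2 * \<bar>a\<bar> * \<bar>d\<bar>) * \<bar>1 + q\<bar>" unfolding ee abs_mult by simp
    also have "\<dots> \<le> (a\<^sup>2 + d\<^sup>2) * C"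
    proof (rule mult_mono)
      show "2 * \<bar>a\<bar> * \<bar>d\<bar> \<le> a\<^sup>2 + d\<^sup>2"
        using sum_squares_bound[of "\<bar>a\<bar>" "\<bar>d\<bar>"] by simp
      show "\<bar>1 + q\<bar> \<le> C" unfolding C_def using q by linarith
    qed auto
    finally show ?thesis unfolding e_def a_def d_def by (simp add: mult_ac)
  qed
  have e0: "e x0 = 0" unfolding e_def using i0 i1 by simp
  have enn: "0 \<le> e t" for t unfolding e_def by simp
  have "e x = 0"
  proof (cases "x0 \<le> x")
    case True
    have "(\<lambda>t. - (e t * exp (- C * t))) x0 \<le> (\<lambda>t. - (e t * exp (- C * t))) x"
    proof (rule DERIV_nonneg_imp_nondecreasing[OF True])
      fix t
      have "((\<lambda>t. - (e t * exp (- C * t))) has_real_derivative - (e' t * exp (- C * t) + e t * (exp (- C * t) * (- C)))) (at t)"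
        by (auto intro!: derivative_eq_intros de)
      moreover have "0 \<le> - (e' t * exp (- C * t) + e t * (exp (- C * t) * (- C)))"
      proof -
        have "e' t \<le> C * e t" using eb[of t] by linarith
        hence "e' t * exp (- C * t) \<le> C * e t * exp (- C * t)" by (simp add: mult_right_mono)
        thus ?thesis by (simp add: algebra_simps)
      qed
      ultimately show "\<exists>y. ((\<lambda>t. - (e t * exp (- C * t))) has_real_derivative y) (at t) \<and> 0 \<le> y" by blast
    qed
    hence "e x * exp (- C * x) \<le> 0" using e0 by simp
    hence "e x \<le> 0" by (simp add: mult_le_0_iff)
    thus ?thesis using enn[of x] by simp
  next
    case False
    hence F: "x \<le> x0" by simp
    have "(\<lambda>t. e t * exp (C * t)) x \<le> (\<lambda>t. e t * exp (C * t)) x0"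
    proof (rule DERIV_nonneg_imp_nondecreasing[OF F])
      fix t
      have "((\<lambda>t. e t * exp (C * t)) has_real_derivative e' t * exp (C * t) + e t * (exp (C * t) * C)) (at t)"
        by (auto intro!: derivative_eq_intros de)
      moreover have "0 \<le> e' t * exp (C * t) + e t * (exp (C * t) * C)"
      proof -
        have "- C * e t \<le> e' t" using eb[of t] by linarith
        hence "(- C * e t) * exp (C * t) \<le> e' t * exp (C * t)" by (intro mult_right_mono) auto
        thus ?thesis by (simp add: algebra_simps)
      qed
      ultimately show "\<exists>y. ((\<lambda>t. e t * exp (C * t)) has_real_derivative y) (at t) \<and> 0 \<le> y" by blast
    qed
    hence "e x * exp (C * x) \<le> 0" using e0 by simp
    hence "e x \<le> 0" by (simp add: mult_le_0_iff)
    thus ?thesis using enn[of x] by simp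
  qed
  thus ?thesis unfolding e_def by (simp add: add_nonneg_eq_0_iff)
qed

lemma per_nat:
  fixes f :: "real \<Rightarrow> real"
  assumes "\<And>x. f (x + T) = f x"
  shows "f (x + real n * T) = f x"
proof (induction n)
  case (Suc n)
  have "f (x + real (Suc n) * T) = f ((x + real n * T) + T)" by (simp add: algebra_simps)
  also have "\<dots> = f (x + real n * T)" by (rule assms)
  finally show ?case using Suc by simp
qed simp

lemma per_int:
  fixes f :: "real \<Rightarrow> real"
  assumes "\<And>x. f (x + T) = f x"
  shows "f (x + of_int n * T) = f x"
proof (cases "n \<ge> 0")
  case True
  obtain m where "n = int m" using True by (intro that[of "nat n"]) simp
  thus ?thesis using per_nat[where f=f and T=T, OF assms] by simp
next
  case False
  obtain m where m: "n = - int m" using False by (intro that[of "nat (- n)"]) simp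
  have "f x = f ((x - real m * T) + real m * T)" by simp
  also have "\<dots> = f (x - real m * T)" by (rule per_nat[where f=f and T=T, OF assms])
  finally show ?thesis using m by simp
qed

lemma periodic_extrema:
  fixes f :: "real \<Rightarrow> real"
  assumes cont: "\<And>x. isCont f x" and T: "T > 0" and per: "\<And>x. f (x + T) = f x"
  shows "\<exists>xm xM. \<forall>x. f xm \<le> f x \<and> f x \<le> f xM"
proof -
  have co: "continuous_on {0..T} f" using cont by (simp add: continuous_at_imp_continuous_on)
  obtain xm where xm: "xm \<in> {0..T}" "\<forall>y\<in>{0..T}. f xm \<le> f y"
    using continuous_attains_inf[OF compact_Icc _ co] T by auto
  obtain xM where xM: "xM \<in> {0..T}" "\<forall>y\<in>{0..T}. f y \<le> f xM"
    using continuous_attains_sup[OF compact_Icc _ co] T by auto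
  have red: "\<exists>r\<in>{0..T}. f x = f r" for x
  proof -
    define n where "n = \<lfloor>x / T\<rfloor>"
    define r where "r = x - of_int n * T"
    have "of_int n \<le> x / T" "x / T < of_int n + 1" unfolding n_def by linarith+
    hence "of_int n * T \<le> x" "x < (of_int n + 1) * T" using T by (simp_all add: field_simps)
    hence "r \<in> {0..T}" unfolding r_def by (simp add: algebra_simps)
    moreover have "f x = f r"
      using per_int[where f=f and T=T, OF per, of r n] unfolding r_def by simp
    ultimately show ?thesis by blast
  qed
  show ?thesis
  proof (intro exI allI)
    fix x obtain r where "r \<in> {0..T}" "f x = f r" using red by blast
    thus "f xm \<le> f x \<and> f x \<le> f xM" using xm xM by simp
  qed
qed

lemma Q_large:
  fixes b c d p :: real
  assumes "\<bar>p\<bar> \<ge> 1 + \<bar>c\<bar> + 2 * \<bar>b\<bar> + 2 * \<bar>d\<bar>"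
  shows "Qpoly b c d p > 0"
proof -
  define a where "a = \<bar>p\<bar>"
  define K where "K = \<bar>c\<bar> + 2 * \<bar>b\<bar> + 2 * \<bar>d\<bar>"
  have a1: "a \<ge> 1" and aK: "a \<ge> 1 + K" using assms unfolding a_def K_def by auto
  have K0: "K \<ge> 0" unfolding K_def by simp
  have "\<bar>- c * p\<^sup>2 + 2 * b * p + 2 * d\<bar> \<le> \<bar>c\<bar> * a\<^sup>2 + 2 * \<bar>b\<bar> * a + 2 * \<bar>d\<bar>"
  proof -
    have "\<bar>- c * p\<^sup>2 + 2 * b * p + 2 * d\<bar> \<le> \<bar>- c * p\<^sup>2\<bar> + \<bar>2 * b * p\<bar> + \<bar>2 * d\<bar>"
      using abs_triangle_ineq[of "- c * p\<^sup>2 + 2 * b * p" "2 * d"] abs_triangle_ineq[of "- c * p\<^sup>2" "2 * b * p"] by linarith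
    moreover have "\<bar>- c * p\<^sup>2\<bar> = \<bar>c\<bar> * a\<^sup>2" unfolding a_def by (simp add: abs_mult)
    moreover have "\<bar>2 * b * p\<bar> = 2 * \<bar>b\<bar> * a" unfolding a_def by (simp add: abs_mult)
    moreover have "\<bar>2 * d\<bar> = 2 * \<bar>d\<bar>" by simp
    ultimately show ?thesis by linarith
  qed
  also have "\<dots> \<le> K * a\<^sup>2"
  proof -
    have aa: "a \<le> a\<^sup>2" using a1 by (simp add: power2_eq_square)
    have a2: "1 \<le> a\<^sup>2" using a1 aa by linarith
    have "2 * \<bar>b\<bar> * a \<le> 2 * \<bar>b\<bar> * a\<^sup>2" using mult_left_mono[OF aa, of "2 * \<bar>b\<bar>"] by simp
    moreover have "2 * \<bar>d\<bar> \<le> 2 * \<bar>d\<bar> * a\<^sup>2" using mult_left_mono[OF a2, of "2 * \<bar>d\<bar>"] by simp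
    ultimately show ?thesis unfolding K_def by (simp add: algebra_simps)
  qed
  also have "\<dots> < a * a\<^sup>2" using aK a1 by (intro mult_strict_right_mono) auto
  also have "\<dots> \<le> a\<^sup>2 * a\<^sup>2" using a1 by (simp add: power2_eq_square)
  also have "\<dots> = p ^ 4" unfolding a_def by (simp add: power2_eq_square power4_eq_xxxx)
  finally show ?thesis unfolding Qpoly_def by linarith
qed

lemma Q_deriv: "(Qpoly b c d has_real_derivative 2 * (2 * p^3 - c * p + b)) (at p)"
proof -
  have "((\<lambda>p. p ^ 4 - c * p\<^sup>2 + 2 * b * p + 2 * d) has_real_derivative 2 * (2 * p^3 - c * p + b)) (at p)"
    by (auto intro!: derivative_eq_intros simp: algebra_simps power2_eq_square power3_eq_cube)
  moreover have "Qpoly b c d = (\<lambda>p. p ^ 4 - c * p\<^sup>2 + 2 * b * p + 2 * d)" by (rule ext) (simp add: Qpoly_def)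
  ultimately show ?thesis by simp
qed

lemma Q_cont: "isCont (Qpoly b c d) p"
  using Q_deriv DERIV_isCont by blast

lemma root_right:
  assumes "Qpoly b c d y < 0" shows "\<exists>r>y. Qpoly b c d r = 0"
proof -
  define R where "R = \<bar>y\<bar> + 1 + \<bar>c\<bar> + 2 * \<bar>b\<bar> + 2 * \<bar>d\<bar>"
  have "Qpoly b c d R > 0" by (rule Q_large) (simp add: R_def)
  moreover have "y \<le> R" unfolding R_def by simp
  moreover have co: "continuous_on {y..R} (Qpoly b c d)" using Q_cont by (simp add: continuous_at_imp_continuous_on)
  ultimately obtain r where "y \<le> r" "r \<le> R" "Qpoly b c d r = 0"
    using IVT'[of "Qpoly b c d" y 0 R, OF less_imp_le[OF assms] less_imp_le _ co] by blast
  moreover have "r \<noteq> y" using assms \<open>Qpoly b c d r = 0\<close> by auto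
  ultimately have "y < r" "Qpoly b c d r = 0" by auto
  thus ?thesis by blast
qed

lemma root_left:
  assumes "Qpoly b c d y < 0" shows "\<exists>r<y. Qpoly b c d r = 0"
proof -
  define R where "R = - (\<bar>y\<bar> + 1 + \<bar>c\<bar> + 2 * \<bar>b\<bar> + 2 * \<bar>d\<bar>)"
  have "Qpoly b c d R > 0" by (rule Q_large) (simp add: R_def)
  moreover have "R \<le> y" unfolding R_def by simp
  moreover have co: "continuous_on {R..y} (Qpoly b c d)" using Q_cont by (simp add: continuous_at_imp_continuous_on)
  ultimately obtain r where "R \<le> r" "r \<le> y" "Qpoly b c d r = 0"
    using IVT2'[of "Qpoly b c d" y 0 R, OF less_imp_le[OF assms] less_imp_le _ co] by blast
  moreover have "r \<noteq> y" using assms \<open>Qpoly b c d r = 0\<close> by auto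
  ultimately have "r < y" "Qpoly b c d r = 0" by auto
  thus ?thesis by blast
qed

lemma bpn_analysis:
  assumes "bpn_solution b c d \<psi>"
  obtains \<psi>1 xm xM B where
    "\<And>x. (\<psi> has_real_derivative \<psi>1 x) (at x)"
    "\<And>x. (\<psi>1 has_real_derivative (2 * (\<psi> x)^3 - c * \<psi> x + b)) (at x)"
    "\<And>x. \<psi> xm \<le> \<psi> x \<and> \<psi> x \<le> \<psi> xM"
    "\<psi>1 xm = 0" "\<psi>1 xM = 0" "\<psi> xm < \<psi> xM"
    "Qpoly b c d (\<psi> xm) = 0" "Qpoly b c d (\<psi> xM) = 0"
    "\<And>p. \<psi> xm \<le> p \<Longrightarrow> p \<le> \<psi> xM \<Longrightarrow> Qpoly b c d p \<ge> 0"
    "\<And>x. \<bar>\<psi> x\<bar> \<le> B"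
proof -
  from assms have sol: "is_solution b c d \<psi>" and bd: "bounded (range \<psi>)"
    and per: "periodic_fun \<psi>" and nc: "nonconstant \<psi>" unfolding bpn_solution_def by auto
  from sol obtain \<psi>1 \<psi>2 \<psi>3 where h: "\<And>x. (\<psi> has_real_derivative \<psi>1 x) (at x) \<and>
        (\<psi>1 has_real_derivative \<psi>2 x) (at x) \<and>
        (\<psi>2 has_real_derivative \<psi>3 x) (at x) \<and>
        \<psi>3 x - 6 * (\<psi> x)\<^sup>2 * \<psi>1 x + c * \<psi>1 x = 0 \<and>
        \<psi>2 x - 2 * (\<psi> x) ^ 3 + c * \<psi> x = b \<and>
        (\<psi>1 x)\<^sup>2 = Qpoly b c d (\<psi> x)" unfolding is_solution_def by blast
  have d0: "(\<psi> has_real_derivative \<psi>1 x) (at x)" for x using h by blast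
  have d1: "(\<psi>1 has_real_derivative (2 * (\<psi> x)^3 - c * \<psi> x + b)) (at x)" for x
  proof -
    have "\<psi>2 x = 2 * (\<psi> x)^3 - c * \<psi> x + b" using h[of x] by linarith
    thus ?thesis using h[of x] by metis
  qed
  have Qe: "(\<psi>1 x)\<^sup>2 = Qpoly b c d (\<psi> x)" for x using h by blast
  have cont: "isCont \<psi> x" for x using d0 DERIV_isCont by blast
  obtain T where T: "T > 0" "\<And>x. \<psi> (x + T) = \<psi> x" using per unfolding periodic_fun_def by blast
  obtain xm xM where ext: "\<And>x. \<psi> xm \<le> \<psi> x \<and> \<psi> x \<le> \<psi> xM"
    using periodic_extrema[OF cont T] by blast
  have z1: "\<psi>1 xm = 0" by (rule DERIV_local_min[OF d0 zero_less_one]) (use ext in auto)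
  have z2: "\<psi>1 xM = 0" by (rule DERIV_local_max[OF d0 zero_less_one]) (use ext in auto)
  have lt: "\<psi> xm < \<psi> xM"
  proof (rule ccontr)
    assume "\<not> ?thesis"
    hence "\<forall>x. \<psi> x = \<psi> xm" using ext by (meson antisym not_less order_trans)
    thus False using nc unfolding nonconstant_def by blast
  qed
  have q1: "Qpoly b c d (\<psi> xm) = 0" using Qe[of xm] z1 by simp
  have q2: "Qpoly b c d (\<psi> xM) = 0" using Qe[of xM] z2 by simp
  have qn: "Qpoly b c d p \<ge> 0" if "\<psi> xm \<le> p" "p \<le> \<psi> xM" for p
  proof -
    have co: "continuous_on A \<psi>" for A using cont by (simp add: continuous_at_imp_continuous_on)
    have "\<exists>x. \<psi> x = p"
    proof (cases "xm \<le> xM")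
      case True thus ?thesis using IVT'[of \<psi> xm p xM, OF that True co] by blast
    next
      case False
      hence "xM \<le> xm" by simp
      thus ?thesis using IVT2'[of \<psi> xm p xM, OF that(1) that(2) _ co] by blast
    qed
    then obtain x where "\<psi> x = p" by blast
    thus ?thesis using Qe[of x] by (metis zero_le_power2)
  qed
  obtain B where B: "\<And>x. \<bar>\<psi> x\<bar> \<le> B" using bd unfolding bounded_iff by auto
  show ?thesis by (rule that[OF d0 d1 ext z1 z2 lt q1 q2 qn B])
qed

lemma equilibrium:
  assumes d0: "\<And>x. (\<psi> has_real_derivative \<psi>1 x) (at x)"
    and d1: "\<And>x. (\<psi>1 has_real_derivative (2 * (\<psi> x)^3 - c * \<psi> x + b)) (at x)"
    and B: "\<And>x. \<bar>\<psi> x\<bar> \<le> B"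
    and i: "\<psi> x0 = v" "\<psi>1 x0 = 0" and f0: "2 * v^3 - c * v + b = 0"
  shows "\<psi> x = v"
proof -
  have dz: "((\<lambda>_. v) has_real_derivative (\<lambda>_. 0) x) (at x)" for x :: real by simp
  have dz1: "((\<lambda>_. 0) has_real_derivative 2 * ((\<lambda>_. v) x)^3 - c * (\<lambda>_. v) x + b) (at x)" for x :: real
    using f0 by simp
  have b1: "\<bar>\<psi> x\<bar> \<le> max B \<bar>v\<bar>" for x by (rule order_trans[OF B max.cobounded1])
  have b2: "\<bar>(\<lambda>_. v) x\<bar> \<le> max B \<bar>v\<bar>" for x :: real by simp
  have i0: "\<psi> x0 = (\<lambda>_. v) x0" using i by simp
  have i1: "\<psi>1 x0 = (\<lambda>_. 0) x0" using i by simp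
  from ode_unique[OF d0 d1 dz dz1 b1 b2 i0 i1] show ?thesis by simp
qed

lemma bpn_card4:
  assumes bpn: "bpn_solution b c d \<psi>"
  shows "card {p. Qpoly b c d p = 0} = 4"
proof -
  obtain \<psi>1 xm xM B where
    d0: "\<And>x. (\<psi> has_real_derivative \<psi>1 x) (at x)" and
    d1: "\<And>x. (\<psi>1 has_real_derivative (2 * (\<psi> x)^3 - c * \<psi> x + b)) (at x)" and
    ext: "\<And>x. \<psi> xm \<le> \<psi> x \<and> \<psi> x \<le> \<psi> xM" and
    z1: "\<psi>1 xm = 0" and z2: "\<psi>1 xM = 0" and lt: "\<psi> xm < \<psi> xM" and
    q1: "Qpoly b c d (\<psi> xm) = 0" and q2: "Qpoly b c d (\<psi> xM) = 0" and
    qn: "\<And>p. \<psi> xm \<le> p \<Longrightarrow> p \<le> \<psi> xM \<Longrightarrow> Qpoly b c d p \<ge> 0" and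
    B: "\<And>x. \<bar>\<psi> x\<bar> \<le> B"
    using bpn_analysis[OF bpn] by blast
  define m where "m = \<psi> xm"
  define M where "M = \<psi> xM"
  have mM: "m < M" using lt by (simp add: m_def M_def)
  have fMnz: "2 * M^3 - c * M + b \<noteq> 0"
  proof
    assume "2 * M^3 - c * M + b = 0"
    hence "\<psi> xm = M" using equilibrium[OF d0 d1 B _ z2, of M xm] by (simp add: M_def)
    thus False using mM by (simp add: m_def)
  qed
  have fmnz: "2 * m^3 - c * m + b \<noteq> 0"
  proof
    assume "2 * m^3 - c * m + b = 0"
    hence "\<psi> xM = m" using equilibrium[OF d0 d1 B _ z1, of m xM] by (simp add: m_def)
    thus False using mM by (simp add: M_def)
  qed
  have fMneg: "2 * M^3 - c * M + b < 0"
  proof (rule ccontr)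
    assume "\<not> ?thesis"
    hence pos: "0 < 2 * (2 * M^3 - c * M + b)" using fMnz by simp
    obtain \<delta> where \<delta>: "\<delta> > 0" "\<And>h. h > 0 \<Longrightarrow> h < \<delta> \<Longrightarrow> Qpoly b c d (M - h) < Qpoly b c d M"
      using DERIV_pos_inc_left[OF Q_deriv pos] by blast
    define h where "h = min (\<delta> / 2) (M - m)"
    have "h > 0" "h < \<delta>" using \<delta>(1) mM by (auto simp: h_def)
    hence "Qpoly b c d (M - h) < 0" using \<delta>(2) q2 by (simp add: M_def)
    moreover have "Qpoly b c d (M - h) \<ge> 0" by (rule qn) (use \<open>h > 0\<close> in \<open>auto simp: h_def m_def M_def\<close>)
    ultimately show False by simp
  qed
  have fmpos: "2 * m^3 - c * m + b > 0"
  proof (rule ccontr)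
    assume "\<not> ?thesis"
    hence neg: "2 * (2 * m^3 - c * m + b) < 0" using fmnz by simp
    obtain \<delta> where \<delta>: "\<delta> > 0" "\<And>h. h > 0 \<Longrightarrow> h < \<delta> \<Longrightarrow> Qpoly b c d m > Qpoly b c d (m + h)"
      using DERIV_neg_dec_right[OF Q_deriv neg] by blast
    define h where "h = min (\<delta> / 2) (M - m)"
    have "h > 0" "h < \<delta>" using \<delta>(1) mM by (auto simp: h_def)
    hence "Qpoly b c d (m + h) < 0" using \<delta>(2) q1 by (simp add: m_def)
    moreover have "Qpoly b c d (m + h) \<ge> 0" by (rule qn) (use \<open>h > 0\<close> in \<open>auto simp: h_def m_def M_def\<close>)
    ultimately show False by simp
  qed
  obtain r2 where r2: "r2 > M" "Qpoly b c d r2 = 0"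
  proof -
    have neg: "2 * (2 * M^3 - c * M + b) < 0" using fMneg by simp
    obtain \<delta> where \<delta>: "\<delta> > 0" "\<And>h. h > 0 \<Longrightarrow> h < \<delta> \<Longrightarrow> Qpoly b c d M > Qpoly b c d (M + h)"
      using DERIV_neg_dec_right[OF Q_deriv neg] by blast
    have "Qpoly b c d (M + \<delta> / 2) < 0" using \<delta> q2 by (simp add: M_def)
    then obtain r where "r > M + \<delta> / 2" "Qpoly b c d r = 0" using root_right by blast
    with \<delta>(1) show ?thesis by (intro that[of r]) auto
  qed
  obtain r1 where r1: "r1 < m" "Qpoly b c d r1 = 0"
  proof -
    have pos: "0 < 2 * (2 * m^3 - c * m + b)" using fmpos by simp
    obtain \<delta> where \<delta>: "\<delta> > 0" "\<And>h. h > 0 \<Longrightarrow> h < \<delta> \<Longrightarrow> Qpoly b c d (m - h) < Qpoly b c d m"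
      using DERIV_pos_inc_left[OF Q_deriv pos] by blast
    have "Qpoly b c d (m - \<delta> / 2) < 0" using \<delta> q1 by (simp add: m_def)
    then obtain r where "r < m - \<delta> / 2" "Qpoly b c d r = 0" using root_left by blast
    with \<delta>(1) show ?thesis by (intro that[of r]) auto
  qed
  show ?thesis
    by (rule quartic_roots(2)[of r2 M m r1]) (use r1 r2 mM q1 q2 in \<open>auto simp: m_def M_def\<close>)
qed


lemma prod_neg1:
  fixes p u1 u2 u3 u4 :: real
  assumes "u4 < p" "p < u3" "u3 < u2" "u2 < u1"
  shows "(p - u1) * (p - u2) * (p - u3) * (p - u4) < 0"
proof -
  have "(p - u1) * (p - u2) > 0" using assms by (intro mult_neg_neg) auto
  moreover have "(p - u3) * (p - u4) < 0" using assms by (intro mult_neg_pos) auto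
  ultimately have "((p - u1) * (p - u2)) * ((p - u3) * (p - u4)) < 0" by (rule mult_pos_neg)
  thus ?thesis by (simp add: mult_ac)
qed

lemma prod_neg2:
  fixes p u1 u2 u3 u4 :: real
  assumes "u4 < u3" "u3 < u2" "u2 < p" "p < u1"
  shows "(p - u1) * (p - u2) * (p - u3) * (p - u4) < 0"
proof -
  have "(p - u1) * (p - u2) < 0" using assms by (intro mult_neg_pos) auto
  moreover have "(p - u3) * (p - u4) > 0" using assms by (intro mult_pos_pos) auto
  ultimately have "((p - u1) * (p - u2)) * ((p - u3) * (p - u4)) < 0" by (rule mult_neg_pos)
  thus ?thesis by (simp add: mult_ac)
qed

lemma bpn_translate:
  fixes b c d u1 u2 u3 u4 :: real
  assumes ord: "u4 < u3" "u3 < u2" "u2 < u1"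
    and roots: "{p. Qpoly b c d p = 0} = {u1, u2, u3, u4}"
    and bpn: "bpn_solution b c d \<psi>"
  defines "nu \<equiv> sqrt ((u1 - u3) * (u2 - u4)) / 2"
    and "k \<equiv> sqrt (((u1 - u4) * (u2 - u3)) / ((u1 - u3) * (u2 - u4)))"
  defines "\<phi> \<equiv> (\<lambda>x. u4 + ((u2 - u4) * (u3 - u4)) / ((u2 - u4) - (u2 - u3) * (jacobi_sn (nu * x) k)\<^sup>2))"
  shows "\<exists>x0. \<forall>x. \<psi> x = \<phi> (x + x0)"
proof -
  obtain \<psi>1 xm xM B where
    d0: "\<And>x. (\<psi> has_real_derivative \<psi>1 x) (at x)" and
    d1: "\<And>x. (\<psi>1 has_real_derivative (2 * (\<psi> x)^3 - c * \<psi> x + b)) (at x)" and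
    ext: "\<And>x. \<psi> xm \<le> \<psi> x \<and> \<psi> x \<le> \<psi> xM" and
    z1: "\<psi>1 xm = 0" and z2: "\<psi>1 xM = 0" and lt: "\<psi> xm < \<psi> xM" and
    q1: "Qpoly b c d (\<psi> xm) = 0" and q2: "Qpoly b c d (\<psi> xM) = 0" and
    qn: "\<And>p. \<psi> xm \<le> p \<Longrightarrow> p \<le> \<psi> xM \<Longrightarrow> Qpoly b c d p \<ge> 0" and
    B: "\<And>x. \<bar>\<psi> x\<bar> \<le> B"
    using bpn_analysis[OF bpn] by blast
  have z: "Qpoly b c d u1 = 0" "Qpoly b c d u2 = 0" "Qpoly b c d u3 = 0" "Qpoly b c d u4 = 0"
    using roots by auto
  have dd: "u1 \<noteq> u2" "u1 \<noteq> u3" "u1 \<noteq> u4" "u2 \<noteq> u3" "u2 \<noteq> u4" "u3 \<noteq> u4" using ord by auto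
  note fac = quartic_factor[OF dd z]
  have mr: "\<psi> xm \<in> {u1, u2, u3, u4}" using q1 roots by blast
  have Mr: "\<psi> xM \<in> {u1, u2, u3, u4}" using q2 roots by blast
  have m3: "\<psi> xm = u3"
  proof -
    have "\<psi> xm \<noteq> u4"
    proof
      assume a: "\<psi> xm = u4"
      hence "u3 \<le> \<psi> xM" using Mr lt ord by auto
      hence "Qpoly b c d ((u4 + u3) / 2) \<ge> 0" using a ord by (intro qn) auto
      moreover have "Qpoly b c d ((u4 + u3) / 2) < 0" unfolding fac by (rule prod_neg1) (use ord in auto)
      ultimately show False by simp
    qed
    moreover have "\<psi> xm \<noteq> u2"
    proof
      assume a: "\<psi> xm = u2"
      hence "u1 \<le> \<psi> xM" using Mr lt ord by auto
      hence "Qpoly b c d ((u2 + u1) / 2) \<ge> 0" using a ord by (intro qn) auto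
      moreover have "Qpoly b c d ((u2 + u1) / 2) < 0" unfolding fac by (rule prod_neg2) (use ord in auto)
      ultimately show False by simp
    qed
    moreover have "\<psi> xm \<noteq> u1" using Mr lt ord by auto
    ultimately show ?thesis using mr by auto
  qed
  have sol: "is_solution b c d \<phi>" using phi_solution[OF ord roots] unfolding \<phi>_def nu_def k_def .
  have pp: "\<phi> 0 = u3" "\<And>x. u3 \<le> \<phi> x \<and> \<phi> x \<le> u2"
    using phi_props(1,4)[OF ord] unfolding \<phi>_def nu_def k_def by blast+
  from sol obtain \<phi>1 \<phi>2 \<phi>3 where h: "\<And>x. (\<phi> has_real_derivative \<phi>1 x) (at x) \<and>
        (\<phi>1 has_real_derivative \<phi>2 x) (at x) \<and>
        (\<phi>2 has_real_derivative \<phi>3 x) (at x) \<and>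
        \<phi>3 x - 6 * (\<phi> x)\<^sup>2 * \<phi>1 x + c * \<phi>1 x = 0 \<and>
        \<phi>2 x - 2 * (\<phi> x) ^ 3 + c * \<phi> x = b \<and>
        (\<phi>1 x)\<^sup>2 = Qpoly b c d (\<phi> x)" unfolding is_solution_def by blast
  have e0: "(\<phi> has_real_derivative \<phi>1 x) (at x)" for x using h by blast
  have e1: "(\<phi>1 has_real_derivative (2 * (\<phi> x)^3 - c * \<phi> x + b)) (at x)" for x
  proof -
    have "\<phi>2 x = 2 * (\<phi> x)^3 - c * \<phi> x + b" using h[of x] by linarith
    thus ?thesis using h[of x] by metis
  qed
  have p1: "\<phi>1 0 = 0" by (rule DERIV_local_min[OF e0 zero_less_one]) (use pp in auto)
  define gg where "gg = (\<lambda>x. \<phi> (x + (- xm)))"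
  define gg1 where "gg1 = (\<lambda>x. \<phi>1 (x + (- xm)))"
  have c0: "(gg has_real_derivative gg1 x) (at x)" for x
    unfolding gg_def gg1_def by (rule DERIV_shift[THEN iffD1]) (rule e0)
  have c1: "(gg1 has_real_derivative (2 * (gg x)^3 - c * gg x + b)) (at x)" for x
    unfolding gg_def gg1_def by (rule DERIV_shift[THEN iffD1]) (rule e1)
  define B' where "B' = max B (\<bar>u3\<bar> + \<bar>u2\<bar>)"
  have b1: "\<bar>\<psi> x\<bar> \<le> B'" for x unfolding B'_def by (rule order_trans[OF B max.cobounded1])
  have b2: "\<bar>gg x\<bar> \<le> B'" for x
  proof -
    have "\<bar>gg x\<bar> \<le> \<bar>u3\<bar> + \<bar>u2\<bar>" using pp(2)[of "x + - xm"] unfolding gg_def by linarith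
    thus ?thesis unfolding B'_def by linarith
  qed
  have i0: "\<psi> xm = gg xm" using m3 pp(1) by (simp add: gg_def)
  have i1: "\<psi>1 xm = gg1 xm" using z1 p1 by (simp add: gg1_def)
  have "\<forall>x. \<psi> x = \<phi> (x + - xm)"
  proof
    fix x show "\<psi> x = \<phi> (x + - xm)" using ode_unique[OF d0 d1 c0 c1 b1 b2 i0 i1, of x] by (simp add: gg_def)
  qed
  thus ?thesis by blast
qed

lemma sorted4:
  fixes S :: "real set"
  assumes "card S = 4"
  shows "\<exists>a b c d. a < b \<and> b < c \<and> c < d \<and> S = {a, b, c, d}"
proof -
  have fin: "finite S" using assms by (metis card.infinite zero_neq_numeral)
  define xs where "xs = sorted_list_of_set S"
  have st: "set xs = S" "sorted_wrt (<) xs" "length xs = 4"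
    using fin assms by (auto simp: xs_def strict_sorted_list_of_set)
  obtain a b c d where "xs = [a, b, c, d]"
    using st(3) by (auto simp: numeral_eq_Suc length_Suc_conv)
  thus ?thesis using st by auto
qed

lemma h_deriv: "((\<lambda>p::real. 2 * p^3 - c * p + b) has_real_derivative 6 * p\<^sup>2 - c) (at p)"
  by (auto intro!: derivative_eq_intros simp: power2_eq_square)

lemma rolle_Q:
  assumes "v < v'" "Qpoly b c d v = 0" "Qpoly b c d v' = 0"
  shows "\<exists>w. v < w \<and> w < v' \<and> 2 * w^3 - c * w + b = 0"
proof -
  have co: "continuous_on {v..v'} (Qpoly b c d)" using Q_cont by (simp add: continuous_at_imp_continuous_on)
  obtain z where z: "v < z" "z < v'" "DERIV (Qpoly b c d) z :> 0"
    using Rolle[OF assms(1) _ co] assms Q_deriv real_differentiable_def by metis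
  have "2 * (2 * z^3 - c * z + b) = 0" using DERIV_unique[OF Q_deriv z(3)] .
  thus ?thesis using z by auto
qed

lemma rolle_h:
  fixes v v' b c :: real
  assumes "v < v'" "2 * v^3 - c * v + b = 0" "2 * v'^3 - c * v' + b = 0"
  shows "\<exists>w. v < w \<and> w < v' \<and> 6 * w\<^sup>2 - c = 0"
proof -
  have co: "continuous_on {v..v'} (\<lambda>p. 2 * p^3 - c * p + b)"
    using h_deriv DERIV_isCont by (simp add: continuous_at_imp_continuous_on DERIV_isCont[OF h_deriv])
  obtain z where z: "v < z" "z < v'" "DERIV (\<lambda>p. 2 * p^3 - c * p + b) z :> 0"
    using Rolle[OF assms(1) _ co] assms h_deriv real_differentiable_def by (metis (no_types, lifting))
  have "6 * z\<^sup>2 - c = 0" using DERIV_unique[OF h_deriv z(3)] .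
  thus ?thesis using z by auto
qed

lemma bcrit_eq:
  fixes s :: real assumes "s > 0"
  shows "b_crit (6 * s\<^sup>2) = 4 * s^3"
proof -
  have "2 * (6 * s\<^sup>2) ^ 3 = (4 * s^3 * sqrt 27)\<^sup>2"
    by (simp add: power_mult_distrib power2_eq_square power3_eq_cube)
  hence "sqrt (2 * (6 * s\<^sup>2) ^ 3) = 4 * s^3 * sqrt 27"
    using assms by simp
  thus ?thesis unfolding b_crit_def by simp
qed

lemma omega_from_roots:
  assumes "card {p. Qpoly b c d p = 0} = 4"
  shows "(b, c) \<in> Omega"
proof -
  obtain v4 v3 v2 v1 where v: "v4 < v3" "v3 < v2" "v2 < v1" and S: "{p. Qpoly b c d p = 0} = {v4, v3, v2, v1}"
    using sorted4[OF assms] by blast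
  have z: "Qpoly b c d v1 = 0" "Qpoly b c d v2 = 0" "Qpoly b c d v3 = 0" "Qpoly b c d v4 = 0"
    using S by auto
  obtain w1 where w1: "v4 < w1" "w1 < v3" "2 * w1^3 - c * w1 + b = 0" using rolle_Q[OF v(1) z(4) z(3)] by blast
  obtain w2 where w2: "v3 < w2" "w2 < v2" "2 * w2^3 - c * w2 + b = 0" using rolle_Q[OF v(2) z(3) z(2)] by blast
  obtain w3 where w3: "v2 < w3" "w3 < v1" "2 * w3^3 - c * w3 + b = 0" using rolle_Q[OF v(3) z(2) z(1)] by blast
  have w12: "w1 < w2" and w23: "w2 < w3" using w1 w2 w3 by auto
  obtain t1 where t1: "w1 < t1" "t1 < w2" "6 * t1\<^sup>2 - c = 0" using rolle_h[OF w12 w1(3) w2(3)] by blast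
  obtain t2 where t2: "w2 < t2" "t2 < w3" "6 * t2\<^sup>2 - c = 0" using rolle_h[OF w23 w2(3) w3(3)] by blast
  have "t1\<^sup>2 = t2\<^sup>2" using t1 t2 by simp
  moreover have "t1 < t2" using t1 t2 by simp
  ultimately have tt: "t1 = - t2" by (metis power2_eq_iff less_irrefl)
  hence s0: "t2 > 0" using \<open>t1 < t2\<close> by simp
  have c: "c = 6 * t2\<^sup>2" using t2 by simp
  have fac: "2 * x^3 - c * x + b = 2 * (x - w1) * (x - w2) * (x - w3)" for x
    by (rule cubic_factor) (use w12 w23 w1 w2 w3 in auto)
  have hm: "2 * (- t2)^3 - c * (- t2) + b > 0"
  proof -
    have "(- t2 - w1) > 0" "(- t2 - w2) < 0" "(- t2 - w3) < 0" using t1 t2 tt by auto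
    hence "2 * (- t2 - w1) * (- t2 - w2) * (- t2 - w3) > 0"
      by (metis mult_neg_neg mult_pos_pos zero_less_numeral mult.assoc)
    thus ?thesis by (simp only: fac)
  qed
  have hp: "2 * t2^3 - c * t2 + b < 0"
  proof -
    have "(t2 - w1) > 0" "(t2 - w2) > 0" "(t2 - w3) < 0" using t1 t2 by auto
    hence "2 * (t2 - w1) * (t2 - w2) * (t2 - w3) < 0"
      by (metis mult_pos_neg mult_pos_pos zero_less_numeral)
    thus ?thesis by (simp only: fac)
  qed
  have "- (4 * t2^3) < b" "b < 4 * t2^3" using hm hp unfolding c by (simp_all add: power2_eq_square power3_eq_cube algebra_simps)
  moreover have "b_crit c = 4 * t2^3" unfolding c by (rule bcrit_eq[OF s0])
  moreover have "c > 0" unfolding c using s0 by simp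
  ultimately show ?thesis unfolding Omega_def by simp
qed


lemma h_large:
  fixes b c p :: real
  assumes "p \<ge> 1 + \<bar>c\<bar> + \<bar>b\<bar>"
  shows "2 * p^3 - c * p + b > 0" "2 * (- p)^3 - c * (- p) + b < 0"
proof -
  have p1: "p \<ge> 1" using assms by simp
  have "p * p \<ge> p * (1 + \<bar>c\<bar> + \<bar>b\<bar>)" using assms p1 by (intro mult_left_mono) auto
  hence "p^3 \<ge> p * (p * (1 + \<bar>c\<bar> + \<bar>b\<bar>))" using p1
    by (simp add: power3_eq_cube mult_left_mono)
  moreover have "p * (p * (1 + \<bar>c\<bar> + \<bar>b\<bar>)) \<ge> p * (1 + \<bar>c\<bar> + \<bar>b\<bar>)"
    using mult_right_mono[OF p1, of "p * (1 + \<bar>c\<bar> + \<bar>b\<bar>)"] p1 by simp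
  ultimately have big: "p^3 \<ge> p + \<bar>c\<bar> * p + \<bar>b\<bar> * p" by (simp add: algebra_simps)
  have f1: "\<bar>b\<bar> * p \<ge> \<bar>b\<bar>" using p1 by (simp add: mult_le_cancel_left1)
  have f2: "c * p \<le> \<bar>c\<bar> * p" using mult_right_mono[of c "\<bar>c\<bar>" p] p1 by simp
  have f3: "- c * p \<le> \<bar>c\<bar> * p" using mult_right_mono[of "- c" "\<bar>c\<bar>" p] p1 by simp
  have f4: "- \<bar>b\<bar> \<le> b" "b \<le> \<bar>b\<bar>" by auto
  have P3: "p^3 = p * p * p" by (simp add: power3_eq_cube)
  have N3: "(- p)^3 = - (p * p * p)" by (simp add: power3_eq_cube)
  have cm: "c * (- p) = - c * p" by simp
  have f5: "0 \<le> \<bar>c\<bar> * p" "0 \<le> \<bar>b\<bar> * p" using p1 by auto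
  show "2 * p^3 - c * p + b > 0" using f1 f2 f4 f5 big p1 P3 by linarith
  show "2 * (- p)^3 - c * (- p) + b < 0" unfolding N3 cm using f1 f3 f4 f5 big p1 P3 by linarith
qed

lemma roots_from_omega:
  assumes "(b, c) \<in> Omega"
  shows "\<exists>d. card {p. Qpoly b c d p = 0} = 4"
proof -
  have c0: "c > 0" and bb: "- b_crit c < b" "b < b_crit c" using assms unfolding Omega_def by auto
  define s where "s = sqrt (c / 6)"
  have s0: "s > 0" unfolding s_def using c0 by simp
  have c: "c = 6 * s\<^sup>2" unfolding s_def using c0 by simp
  have bc: "b_crit c = 4 * s^3" unfolding c by (rule bcrit_eq[OF s0])
  define h where "h = (\<lambda>p::real. 2 * p^3 - c * p + b)"
  have hcont: "continuous_on A h" for A unfolding h_def by (intro continuous_intros)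
  have hms: "h (- s) > 0" unfolding h_def c using bb bc by (simp add: power2_eq_square power3_eq_cube algebra_simps)
  have hs: "h s < 0" unfolding h_def c using bb bc by (simp add: power2_eq_square power3_eq_cube algebra_simps)
  define R where "R = 1 + \<bar>c\<bar> + \<bar>b\<bar> + s"
  have hR: "h R > 0" "h (- R) < 0" unfolding h_def using h_large[where b=b and c=c and p=R] s0 by (auto simp: R_def)
  have sR: "s < R" unfolding R_def by simp
  obtain w1 where w1: "- R \<le> w1" "w1 \<le> - s" "h w1 = 0"
    using IVT'[of h "- R" 0 "- s", OF _ _ _ hcont] hR hms sR by force
  obtain w2 where w2: "- s \<le> w2" "w2 \<le> s" "h w2 = 0"
    using IVT2'[of h s 0 "- s", OF _ _ _ hcont] hs hms s0 by force
  obtain w3 where w3: "s \<le> w3" "w3 \<le> R" "h w3 = 0"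
    using IVT'[of h s 0 R, OF _ _ _ hcont] hs hR sR by force
  have "w1 \<noteq> - s" "w2 \<noteq> - s" "w2 \<noteq> s" "w3 \<noteq> s" using w1(3) w2(3) w3(3) hms hs by auto
  hence w1s: "w1 < - s" and w2s: "- s < w2" "w2 < s" and w3s: "s < w3" using w1 w2 w3 by auto
  have w12: "w1 < w2" and w23: "w2 < w3" using w1s w2s w3s by auto
  have fac: "h x = 2 * (x - w1) * (x - w2) * (x - w3)" for x
    unfolding h_def by (rule cubic_factor) (use w12 w23 w1 w2 w3 in \<open>auto simp: h_def\<close>)
  define Q0 where "Q0 = Qpoly b c 0"
  have dQ0: "DERIV Q0 x :> 2 * h x" for x unfolding Q0_def h_def by (rule Q_deriv)
  have Q0c: "continuous_on A Q0" for A unfolding Q0_def using Q_cont by (simp add: continuous_at_imp_continuous_on)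
  have inc: "Q0 w1 < Q0 w2"
  proof (rule DERIV_pos_imp_increasing_open[OF w12 _ Q0c])
    fix x assume x: "w1 < x" "x < w2"
    have "(x - w1) > 0" "(x - w2) < 0" "(x - w3) < 0" using x w23 by auto
    hence "2 * (x - w1) * (x - w2) * (x - w3) > 0"
      by (metis mult_neg_neg mult_pos_pos zero_less_numeral mult.assoc)
    hence "2 * h x > 0" by (simp only: fac)
    thus "\<exists>y. DERIV Q0 x :> y \<and> 0 < y" using dQ0 by blast
  qed
  have dec: "Q0 w2 > Q0 w3"
  proof (rule DERIV_neg_imp_decreasing_open[OF w23 _ Q0c])
    fix x assume x: "w2 < x" "x < w3"
    have "(x - w1) > 0" "(x - w2) > 0" "(x - w3) < 0" using x w12 by auto
    hence "2 * (x - w1) * (x - w2) * (x - w3) < 0"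
      by (metis mult_pos_neg mult_pos_pos zero_less_numeral)
    hence "2 * h x < 0" by (simp only: fac)
    thus "\<exists>y. DERIV Q0 x :> y \<and> y < 0" using dQ0 by blast
  qed
  define mx where "mx = max (Q0 w1) (Q0 w3)"
  define d where "d = - (Q0 w2 + mx) / 4"
  have Qd: "Qpoly b c d p = Q0 p + 2 * d" for p unfolding Q0_def Qpoly_def by simp
  have q1: "Qpoly b c d w1 < 0" and q2: "Qpoly b c d w2 > 0" and q3: "Qpoly b c d w3 < 0"
    using inc dec unfolding Qd unfolding d_def mx_def by (auto simp: max_def field_simps)
  have Qc: "continuous_on A (Qpoly b c d)" for A using Q_cont by (simp add: continuous_at_imp_continuous_on)
  obtain r1 where r1: "r1 < w1" "Qpoly b c d r1 = 0" using root_left[OF q1] by blast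
  obtain r4 where r4: "r4 > w3" "Qpoly b c d r4 = 0" using root_right[OF q3] by blast
  obtain r2 where r2: "w1 \<le> r2" "r2 \<le> w2" "Qpoly b c d r2 = 0"
    using IVT'[of "Qpoly b c d" w1 0 w2, OF _ _ _ Qc] q1 q2 w12 by force
  obtain r3 where r3: "w2 \<le> r3" "r3 \<le> w3" "Qpoly b c d r3 = 0"
    using IVT2'[of "Qpoly b c d" w3 0 w2, OF _ _ _ Qc] q3 q2 w23 by force
  have "r2 \<noteq> w1" "r2 \<noteq> w2" "r3 \<noteq> w2" "r3 \<noteq> w3" using r2 r3 q1 q2 q3 by auto
  hence "card {p. Qpoly b c d p = 0} = 4"
    by (intro quartic_roots(2)[of r4 r3 r2 r1]) (use r1 r2 r3 r4 in auto)
  thus ?thesis by blast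
qed

theorem lemma1:
  fixes b c d :: real
  shows "((\<exists>\<phi>. bpn_solution b c d \<phi>) \<longleftrightarrow> card {p. Qpoly b c d p = 0} = 4)
    \<and> ((\<exists>d'. card {p. Qpoly b c d' p = 0} = 4) \<longleftrightarrow> (b, c) \<in> Omega)
    \<and> (\<forall>u1 u2 u3 u4. u4 < u3 \<and> u3 < u2 \<and> u2 < u1 \<and>
          {p. Qpoly b c d p = 0} = {u1, u2, u3, u4} \<longrightarrow>
        (let \<nu> = sqrt ((u1 - u3) * (u2 - u4)) / 2;
             k = sqrt (((u1 - u4) * (u2 - u3)) / ((u1 - u3) * (u2 - u4)));
             \<phi> = (\<lambda>x. u4 + ((u2 - u4) * (u3 - u4)) /
                        ((u2 - u4) - (u2 - u3) * (jacobi_sn (\<nu> * x) k)\<^sup>2))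
         in is_solution b c d \<phi>
            \<and> bpn_solution b c d \<phi>
            \<and> fundamental_period \<phi> (2 * ellip_K k / \<nu>)
            \<and> \<phi> 0 = u3 \<and> \<phi> (ellip_K k / \<nu>) = u2 \<and> \<phi> (- ellip_K k / \<nu>) = u2
            \<and> (\<forall>x\<in>{- ellip_K k / \<nu> .. ellip_K k / \<nu>}. u3 \<le> \<phi> x \<and> \<phi> x \<le> u2)
            \<and> (\<forall>\<psi>. bpn_solution b c d \<psi> \<longrightarrow> (\<exists>x0. \<forall>x. \<psi> x = \<phi> (x + x0)))))"
proof (intro conjI)
  show "(\<exists>\<phi>. bpn_solution b c d \<phi>) \<longleftrightarrow> card {p. Qpoly b c d p = 0} = 4"
  proof
    assume "\<exists>\<phi>. bpn_solution b c d \<phi>"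
    thus "card {p. Qpoly b c d p = 0} = 4" using bpn_card4 by blast
  next
    assume "card {p. Qpoly b c d p = 0} = 4"
    then obtain a1 a2 a3 a4 where o: "a1 < a2" "a2 < a3" "a3 < a4" and S: "{p. Qpoly b c d p = 0} = {a1, a2, a3, a4}"
      using sorted4 by blast
    have r: "{p. Qpoly b c d p = 0} = {a4, a3, a2, a1}" using S by auto
    note S1 = phi_solution[OF o r] and P = phi_props[OF o]
    show "\<exists>\<phi>. bpn_solution b c d \<phi>" unfolding bpn_solution_def using S1 P by blast
  qed
  show "(\<exists>d'. card {p. Qpoly b c d' p = 0} = 4) \<longleftrightarrow> (b, c) \<in> Omega"
    using omega_from_roots roots_from_omega by blast
  show "\<forall>u1 u2 u3 u4. u4 < u3 \<and> u3 < u2 \<and> u2 < u1 \<and>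
          {p. Qpoly b c d p = 0} = {u1, u2, u3, u4} \<longrightarrow>
        (let \<nu> = sqrt ((u1 - u3) * (u2 - u4)) / 2;
             k = sqrt (((u1 - u4) * (u2 - u3)) / ((u1 - u3) * (u2 - u4)));
             \<phi> = (\<lambda>x. u4 + ((u2 - u4) * (u3 - u4)) /
                        ((u2 - u4) - (u2 - u3) * (jacobi_sn (\<nu> * x) k)\<^sup>2))
         in is_solution b c d \<phi>
            \<and> bpn_solution b c d \<phi>
            \<and> fundamental_period \<phi> (2 * ellip_K k / \<nu>)
            \<and> \<phi> 0 = u3 \<and> \<phi> (ellip_K k / \<nu>) = u2 \<and> \<phi> (- ellip_K k / \<nu>) = u2
            \<and> (\<forall>x\<in>{- ellip_K k / \<nu> .. ellip_K k / \<nu>}. u3 \<le> \<phi> x \<and> \<phi> x \<le> u2)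
            \<and> (\<forall>\<psi>. bpn_solution b c d \<psi> \<longrightarrow> (\<exists>x0. \<forall>x. \<psi> x = \<phi> (x + x0))))"
  proof (intro allI impI)
    fix u1 u2 u3 u4 :: real
    assume H: "u4 < u3 \<and> u3 < u2 \<and> u2 < u1 \<and> {p. Qpoly b c d p = 0} = {u1, u2, u3, u4}"
    hence o: "u4 < u3" "u3 < u2" "u2 < u1" and r: "{p. Qpoly b c d p = 0} = {u1, u2, u3, u4}" by auto
    note S1 = phi_solution[OF o r] and P = phi_props[OF o] and U = bpn_translate[OF o r]
    show "let \<nu> = sqrt ((u1 - u3) * (u2 - u4)) / 2;
             k = sqrt (((u1 - u4) * (u2 - u3)) / ((u1 - u3) * (u2 - u4)));
             \<phi> = (\<lambda>x. u4 + ((u2 - u4) * (u3 - u4)) /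
                        ((u2 - u4) - (u2 - u3) * (jacobi_sn (\<nu> * x) k)\<^sup>2))
         in is_solution b c d \<phi>
            \<and> bpn_solution b c d \<phi>
            \<and> fundamental_period \<phi> (2 * ellip_K k / \<nu>)
            \<and> \<phi> 0 = u3 \<and> \<phi> (ellip_K k / \<nu>) = u2 \<and> \<phi> (- ellip_K k / \<nu>) = u2
            \<and> (\<forall>x\<in>{- ellip_K k / \<nu> .. ellip_K k / \<nu>}. u3 \<le> \<phi> x \<and> \<phi> x \<le> u2)
            \<and> (\<forall>\<psi>. bpn_solution b c d \<psi> \<longrightarrow> (\<exists>x0. \<forall>x. \<psi> x = \<phi> (x + x0)))"
      unfolding Let_def bpn_solution_def using S1 P U[unfolded bpn_solution_def] by blast
  qed
qed

end
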